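(* The subspace $\mathbf{\Pi}$ is a graded sub-bialgebra of $(\textbf{W},\nabla_{\sqcup\!\sqcup},\iota_{\sqcup\!\sqcup},\Delta_\odot,\epsilon_\odot)$.
   Context: Let $\Bbbk$ be a field. A word is a finite sequence of positive integers. For a word $w=w_1\cdots w_m$ with $\max(w)\le n\in\mathbb{N}$, $[w,n]$ denotes the linear endomorphism of the shuffle algebra (span of all words) sending a word $v$ of length $n$ to $v_{w_1}\cdots v_{w_m}$ and other words to $0$; $\textbf{W}$ is the span of all such $[w,n]$, graded by $\deg[w,n]=m$. $\textbf{W}$ is a graded bialgebra with product $\nabla_{\sqcup\!\sqcup}([v,m]\otimes[w,n]) = [v\sqcup\!\sqcup (w\uparrow m), m+n]$ ($\sqcup\!\sqcup$ the shuffle product of words, $w\uparrow m$ adds $m$ to each letter), unit $\iota_{\sqcup\!\sqcup}(1)=[\emptyset,0]$, coproduct $\Delta_\odot([w,n])=\sum_{i=0}^m [w_1\cdots w_i,n]\otimes[w_{i+1}\cdots w_m,n]$ and counit $\epsilon_\odot([w,n])=1$ if $w=\emptyset$, else $0$. For $\pi$ in the symmetric group $S_{n+1}$ with simple transpositions $s_i=(i,i+1)$, let $\mathcal{R}(\pi)$ be its set of reduced words and $[\pi]=\sum_{w\in\mathcal{R}(\pi)}[w,n]\in\textbf{W}$. Let $\mathbf{\Pi}_n$ be the span of $\{[\pi]:\pi\in S_{n+1}\}$ and $\mathbf{\Pi}=\bigoplus_{n\in\mathbb{N}}\mathbf{\Pi}_n$. *)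

theory Defs
  imports "HOL.Modules" "HOL-Library.Poly_Mapping" "HOL-Library.Multiset" "HOL-Combinatorics.Permutations"
          "HOL-Combinatorics.Transposition"
begin

text \<open>Words are lists of positive naturals. The symbol [w,n] (with letters of w in {1..n})
  is a basis element; since the [w,n] are linearly independent endomorphisms, W is the free
  vector space on the pairs (w,n) with set w a subset of {1..n}.\<close>

type_synonym 'k W = "(nat list \<times> nat) \<Rightarrow>\<^sub>0 'k"
type_synonym 'k WW = "((nat list \<times> nat) \<times> (nat list \<times> nat)) \<Rightarrow>\<^sub>0 'k"

definition pm_smult :: "'k::field \<Rightarrow> ('a \<Rightarrow>\<^sub>0 'k) \<Rightarrow> ('a \<Rightarrow>\<^sub>0 'k)" where
  "pm_smult c p = Poly_Mapping.map (\<lambda>x. c * x) p"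

definition lin_span :: "('a \<Rightarrow>\<^sub>0 'k::field) set \<Rightarrow> ('a \<Rightarrow>\<^sub>0 'k) set" where
  "lin_span S = module.span pm_smult S"

definition W_space :: "'k::field W set" where
  "W_space = {a. \<forall>(w,n)\<in>Poly_Mapping.keys a. set w \<subseteq> {1..n}}"

definition W_basis :: "nat list \<Rightarrow> nat \<Rightarrow> 'k::field W" where
  "W_basis w n = Poly_Mapping.single (w, n) 1"

definition W_deg_part :: "nat \<Rightarrow> 'k::field W \<Rightarrow> 'k W" where
  "W_deg_part d a = (\<Sum>x\<in>Poly_Mapping.keys a. if length (fst x) = d then Poly_Mapping.single x (Poly_Mapping.lookup a x) else 0)"

fun shuffle_ms :: "nat list \<Rightarrow> nat list \<Rightarrow> nat list multiset" where
  "shuffle_ms [] ys = {#ys#}"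
| "shuffle_ms xs [] = {#xs#}"
| "shuffle_ms (x # xs) (y # ys) =
     image_mset ((#) x) (shuffle_ms xs (y # ys)) + image_mset ((#) y) (shuffle_ms (x # xs) ys)"

definition shift_word :: "nat list \<Rightarrow> nat \<Rightarrow> nat list" where
  "shift_word w m = map (\<lambda>i. i + m) w"

definition W_mult_basis :: "nat list \<times> nat \<Rightarrow> nat list \<times> nat \<Rightarrow> 'k::field W" where
  "W_mult_basis x y = (case x of (v, m) \<Rightarrow> case y of (w, n) \<Rightarrow>
     sum_mset (image_mset (\<lambda>u. W_basis u (m + n)) (shuffle_ms v (shift_word w m))))"

definition W_mult :: "'k::field W \<Rightarrow> 'k W \<Rightarrow> 'k W" where
  "W_mult a b = (\<Sum>x\<in>Poly_Mapping.keys a. \<Sum>y\<in>Poly_Mapping.keys b. pm_smult (Poly_Mapping.lookup a x * Poly_Mapping.lookup b y) (W_mult_basis x y))"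

definition W_unit :: "'k::field W" where
  "W_unit = W_basis [] 0"

text \<open>W tensor W is the free vector space on pairs of basis elements.\<close>
definition W_tensor :: "'k::field W \<Rightarrow> 'k W \<Rightarrow> 'k WW" where
  "W_tensor a b = (\<Sum>x\<in>Poly_Mapping.keys a. \<Sum>y\<in>Poly_Mapping.keys b. Poly_Mapping.single (x, y) (Poly_Mapping.lookup a x * Poly_Mapping.lookup b y))"

definition W_coprod_basis :: "nat list \<times> nat \<Rightarrow> 'k::field WW" where
  "W_coprod_basis x = (case x of (w, n) \<Rightarrow>
     (\<Sum>i\<in>{0..length w}. Poly_Mapping.single ((take i w, n), (drop i w, n)) 1))"

definition W_coprod :: "'k::field W \<Rightarrow> 'k WW" where
  "W_coprod a = (\<Sum>x\<in>Poly_Mapping.keys a. pm_smult (Poly_Mapping.lookup a x) (W_coprod_basis x))"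

definition W_counit :: "'k::field W \<Rightarrow> 'k" where
  "W_counit a = (\<Sum>x\<in>Poly_Mapping.keys a. if fst x = [] then Poly_Mapping.lookup a x else 0)"

text \<open>Symmetric group S_{n+1} as permutations of {1..n+1}; s_i = transposition (i,i+1).
  A word w (letters in {1..n}) represents s_{w_1} \<circ> ... \<circ> s_{w_m}.\<close>
definition word_perm :: "nat list \<Rightarrow> nat \<Rightarrow> nat" where
  "word_perm w = foldr (\<lambda>i f. transpose i (Suc i) \<circ> f) w id"

definition is_word_for :: "nat \<Rightarrow> (nat \<Rightarrow> nat) \<Rightarrow> nat list \<Rightarrow> bool" where
  "is_word_for n \<pi> w \<longleftrightarrow> set w \<subseteq> {1..n} \<and> word_perm w = \<pi>"

definition reduced_words :: "nat \<Rightarrow> (nat \<Rightarrow> nat) \<Rightarrow> nat list set" where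
  "reduced_words n \<pi> = {w. is_word_for n \<pi> w \<and> (\<forall>u. is_word_for n \<pi> u \<longrightarrow> length w \<le> length u)}"

definition perm_elt :: "nat \<Rightarrow> (nat \<Rightarrow> nat) \<Rightarrow> 'k::field W" where
  "perm_elt n \<pi> = (\<Sum>w\<in>reduced_words n \<pi>. W_basis w n)"

definition Pi_space :: "'k::field W set" where
  "Pi_space = lin_span {perm_elt n \<pi> | n \<pi>. \<pi> permutes {1..n+1}}"

definition tensor_span :: "'k::field W set \<Rightarrow> 'k WW set" where
  "tensor_span A = lin_span {W_tensor a b | a b. a \<in> A \<and> b \<in> A}"

end

theory Submission
  imports Defs
begin


abbreviation st :: "nat \<Rightarrow> nat \<Rightarrow> nat" where "st i \<equiv> Transposition.transpose i (Suc i)"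

lemma st_st: "st i \<circ> st i = id"
  by (simp add: transpose_comp_involutory)

lemma st_comm: "Suc i < j \<or> Suc j < i \<Longrightarrow> st i \<circ> st j = st j \<circ> st i"
  by (rule swap_id_independent) auto

lemma st_braid: "st i \<circ> st (Suc i) \<circ> st i = st (Suc i) \<circ> st i \<circ> st (Suc i)"
  by (auto simp: fun_eq_iff transpose_def)

lemma foldr_st: "foldr (\<lambda>i f. st i \<circ> f) w g = foldr (\<lambda>i f. st i \<circ> f) w id \<circ> g"
  by (induction w) auto

lemma wp_append: "word_perm (x @ y) = word_perm x \<circ> word_perm y"
  unfolding word_perm_def by (simp add: foldr_st[of x "foldr _ y id"])

lemma wp_Nil[simp]: "word_perm [] = id"
  by (simp add: word_perm_def)

lemma wp_single[simp]: "word_perm [i] = st i"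
  by (simp add: word_perm_def)

lemma wp_snoc: "word_perm (x @ [i]) = word_perm x \<circ> st i"
  by (simp add: wp_append)

lemma wp_permutes: "set w \<subseteq> {1..N} \<Longrightarrow> word_perm w permutes {1..Suc N}"
proof (induction w rule: rev_induct)
  case Nil then show ?case by (simp only: wp_Nil permutes_id)
next
  case (snoc x xs)
  have "st x permutes {1..Suc N}" using snoc.prems by (intro permutes_swap_id) auto
  moreover have "word_perm xs permutes {1..Suc N}" using snoc by auto
  ultimately show ?case unfolding wp_snoc by (rule permutes_compose)
qed

definition invs :: "(nat \<Rightarrow> nat) \<Rightarrow> (nat \<times> nat) set" where
  "invs p = {(a,b). a < b \<and> p b < p a}"

definition ninv :: "(nat \<Rightarrow> nat) \<Rightarrow> nat" where
  "ninv p = card (invs p)"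

lemma invs_sub: assumes "p permutes {1..K}" shows "invs p \<subseteq> {1..K} \<times> {1..K}"
proof
  fix ab assume "ab \<in> invs p"
  then obtain a b where ab: "ab = (a,b)" "a < b" "p b < p a" by (auto simp: invs_def)
  have b: "b \<in> {1..K}"
  proof (rule ccontr)
    assume nb: "b \<notin> {1..K}"
    then have pb: "p b = b" using assms permutes_not_in by metis
    have "b > K" using nb ab(2) by auto
    show False
    proof (cases "a \<in> {1..K}")
      case True
      then have "p a \<in> {1..K}" using assms permutes_in_image by metis
      then show False using pb ab \<open>b > K\<close> by auto
    next
      case False
      then have "p a = a" using assms permutes_not_in by metis
      then show False using pb ab by auto
    qed
  qed
  have a: "a \<in> {1..K}"
  proof (rule ccontr)
    assume na: "a \<notin> {1..K}"
    then have "a = 0" using b ab(2) by auto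
    moreover have "p a = a" using na assms permutes_not_in by metis
    ultimately show False using ab by auto
  qed
  show "ab \<in> {1..K} \<times> {1..K}" using a b ab by auto
qed

lemma finite_invs: "p permutes {1..K} \<Longrightarrow> finite (invs p)"
  by (rule finite_subset[OF invs_sub]) auto

lemma ninv_id[simp]: "ninv id = 0"
proof -
  have "invs id = {}" by (auto simp: invs_def)
  then show ?thesis by (simp add: ninv_def)
qed

lemma st_order: "a < b \<Longrightarrow> (a,b) \<noteq> (i, Suc i) \<Longrightarrow> st i a < st i b"
  by (auto simp: transpose_def)

lemma ninv_st:
  assumes p: "p permutes {1..K}" and i: "1 \<le> i" "Suc i \<le> K"
  shows "ninv (p \<circ> st i) = (if p i < p (Suc i) then Suc (ninv p) else ninv p - 1)"
    and "p (Suc i) < p i \<Longrightarrow> ninv p \<ge> 1"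
proof -
  define s where "s = st i"
  define f where "f = (\<lambda>(a,b). (s a, s b))"
  define q where "q = (i, Suc i)"
  have sp: "s permutes {1..K}" unfolding s_def using i by (intro permutes_swap_id) auto
  have ps: "p \<circ> s permutes {1..K}" using sp p by (rule permutes_compose)
  have fin1: "finite (invs p)" using p by (rule finite_invs)
  have fin2: "finite (invs (p \<circ> s))" using ps by (rule finite_invs)
  have ss: "s (s x) = x" for x unfolding s_def by (simp add: transpose_def)
  have ff: "f (f x) = x" for x unfolding f_def by (auto simp: ss split: prod.splits)
  have img: "invs (p \<circ> s) - {q} = f ` (invs p - {q})"
  proof
    show "invs (p \<circ> s) - {q} \<subseteq> f ` (invs p - {q})"
    proof
      fix x assume x: "x \<in> invs (p \<circ> s) - {q}"
      then obtain a b where ab: "x = (a,b)" "a < b" "p (s b) < p (s a)" "(a,b) \<noteq> q"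
        by (auto simp: invs_def)
      have "s a < s b" using st_order[OF ab(2)] ab(4) unfolding q_def s_def by auto
      moreover have "(s a, s b) \<noteq> q"
        using ab(2) unfolding q_def s_def by (auto simp: transpose_def split: if_splits)
      ultimately have "(s a, s b) \<in> invs p - {q}" using ab by (auto simp: invs_def)
      moreover have "f (s a, s b) = x" using ab by (simp add: f_def ss)
      ultimately show "x \<in> f ` (invs p - {q})" by force
    qed
  next
    show "f ` (invs p - {q}) \<subseteq> invs (p \<circ> s) - {q}"
    proof
      fix x assume "x \<in> f ` (invs p - {q})"
      then obtain a b where ab: "x = f (a,b)" "a < b" "p b < p a" "(a,b) \<noteq> q"
        by (auto simp: invs_def)
      have "s a < s b" using st_order[OF ab(2)] ab(4) unfolding q_def s_def by auto
      moreover have "(s a, s b) \<noteq> q"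
        using ab(2) unfolding q_def s_def by (auto simp: transpose_def split: if_splits)
      ultimately show "x \<in> invs (p \<circ> s) - {q}" using ab by (auto simp: invs_def f_def ss)
    qed
  qed
  have injf: "inj_on f (invs p - {q})" by (metis ff inj_on_inverseI)
  have c: "card (invs (p \<circ> s) - {q}) = card (invs p - {q})"
    using img injf by (simp add: card_image)
  have inj: "inj p" using p by (rule permutes_inj)
  have ne: "p i \<noteq> p (Suc i)" using inj by (metis injD n_not_Suc_n)
  have q1: "q \<in> invs (p \<circ> s) \<longleftrightarrow> p i < p (Suc i)"
    unfolding q_def s_def invs_def by (simp add: transpose_def)
  have q2: "q \<in> invs p \<longleftrightarrow> p (Suc i) < p i"
    unfolding q_def invs_def by simp
  show "ninv (p \<circ> st i) = (if p i < p (Suc i) then Suc (ninv p) else ninv p - 1)"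
  proof (cases "p i < p (Suc i)")
    case True
    then have "q \<notin> invs p" using q2 by auto
    then have "card (invs p) = card (invs p - {q})" by simp
    moreover have "card (invs (p \<circ> s)) = Suc (card (invs (p \<circ> s) - {q}))"
      using card.remove[OF fin2] True q1 by simp
    ultimately show ?thesis using True c unfolding ninv_def s_def by simp
  next
    case False
    then have F: "p (Suc i) < p i" using ne by auto
    then have "q \<notin> invs (p \<circ> s)" using q1 False by auto
    then have "card (invs (p \<circ> s)) = card (invs (p \<circ> s) - {q})" by simp
    moreover have "card (invs p) = Suc (card (invs p - {q}))"
      using card.remove[OF fin1] F q2 by simp
    ultimately show ?thesis using False c unfolding ninv_def s_def by simp
  qed
  show "p (Suc i) < p i \<Longrightarrow> ninv p \<ge> 1"
    using q2 fin1 unfolding ninv_def by (metis One_nat_def Suc_leI card_gt_0_iff empty_iff)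
qed

lemma ninv_mono_aux:
  assumes "set b \<subseteq> {1..N}" "p permutes {1..Suc N}"
  shows "ninv (p \<circ> word_perm b) \<le> ninv p + length b \<and> p \<circ> word_perm b permutes {1..Suc N}"
  using assms
proof (induction b rule: rev_induct)
  case Nil then show ?case by simp
next
  case (snoc x xs)
  have sub: "set xs \<subseteq> {1..N}" using snoc.prems by auto
  have IH0: "ninv (p \<circ> word_perm xs) \<le> ninv p + length xs \<and> p \<circ> word_perm xs permutes {1..Suc N}"
    by (rule snoc.IH[OF sub snoc.prems(2)])
  then have IH: "ninv (p \<circ> word_perm xs) \<le> ninv p + length xs"
    "p \<circ> word_perm xs permutes {1..Suc N}" by blast+
  have x: "1 \<le> x" "Suc x \<le> Suc N" using snoc.prems by auto
  have e: "p \<circ> word_perm (xs @ [x]) = (p \<circ> word_perm xs) \<circ> st x"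
    by (simp add: wp_snoc o_assoc)
  have "st x permutes {1..Suc N}" using x by (intro permutes_swap_id) auto
  then have "p \<circ> word_perm (xs @ [x]) permutes {1..Suc N}"
    unfolding e using IH(2) by (simp add: permutes_compose)
  moreover have "ninv (p \<circ> word_perm (xs @ [x])) \<le> ninv p + length (xs @ [x])"
    unfolding e ninv_st(1)[OF IH(2) x] using IH(1) by auto
  ultimately show ?case by blast
qed

lemma ninv_le_length: "set w \<subseteq> {1..N} \<Longrightarrow> ninv (word_perm w) \<le> length w"
  using ninv_mono_aux[of w N id] by (simp add: permutes_id)

lemma no_invs_id:
  assumes p: "p permutes S" and e: "invs p = {}"
  shows "p = id"
proof (rule ccontr)
  assume "p \<noteq> id"
  then have ex: "\<exists>x. p x \<noteq> x" by auto
  define x where "x = (LEAST x. p x \<noteq> x)"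
  have px: "p x \<noteq> x" unfolding x_def by (rule LeastI_ex[OF ex])
  have below: "y < x \<Longrightarrow> p y = y" for y unfolding x_def using not_less_Least by blast
  have inj: "inj p" using p by (rule permutes_inj)
  have gt: "p x > x"
  proof (rule ccontr)
    assume "\<not> p x > x"
    then have "p x < x" using px by auto
    then have "p (p x) = p x" using below by auto
    then show False using inj px by (metis injD)
  qed
  obtain x' where x': "p x' = x" using permutes_surj[OF p] by (metis surjD)
  have "x' \<noteq> x" using x' px by auto
  have "\<not> x' < x" using below x' \<open>x' \<noteq> x\<close> by force
  then have "x < x'" using \<open>x' \<noteq> x\<close> by auto
  then have "(x, x') \<in> invs p" using gt x' by (simp add: invs_def)
  then show False using e by auto
qed

lemma descent_exists:
  fixes p :: "nat \<Rightarrow> nat"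
  assumes inj: "inj p"
  shows "a < b \<Longrightarrow> p b < p a \<Longrightarrow> \<exists>c. a \<le> c \<and> c < b \<and> p (Suc c) < p c"
proof (induction "b - a" arbitrary: a)
  case 0 then show ?case by simp
next
  case (Suc d)
  show ?case
  proof (cases "p (Suc a) < p a")
    case True then show ?thesis using Suc.prems by auto
  next
    case False
    have "p a \<noteq> p (Suc a)" using inj by (metis injD n_not_Suc_n)
    then have "p a < p (Suc a)" using False by auto
    show ?thesis
    proof (cases "Suc a = b")
      case True then show ?thesis using \<open>p a < p (Suc a)\<close> Suc.prems by auto
    next
      case False
      then have "Suc a < b" using Suc.prems by auto
      moreover have "p b < p (Suc a)" using \<open>p a < p (Suc a)\<close> Suc.prems by auto
      moreover have d: "d = b - Suc a" using Suc.hyps(2) by linarith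
      ultimately obtain c where "Suc a \<le> c \<and> c < b \<and> p (Suc c) < p c" using Suc.hyps(1)[OF d] by blast
      then show ?thesis by (intro exI[of _ c]) auto
    qed
  qed
qed

lemma exists_red_word:
  "p permutes {1..Suc N} \<Longrightarrow> \<exists>w. set w \<subseteq> {1..N} \<and> word_perm w = p \<and> length w = ninv p"
proof (induction "ninv p" arbitrary: p)
  case 0
  then have "invs p = {}" using finite_invs[OF 0(2)] by (simp add: ninv_def)
  then have "p = id" using 0(2) no_invs_id by blast
  then show ?case using 0(1) by (intro exI[of _ "[]"]) simp
next
  case (Suc k)
  have pp: "p permutes {1..Suc N}" by fact
  have kk: "Suc k = ninv p" by fact
  then have "invs p \<noteq> {}" by (auto simp: ninv_def)
  then obtain a b where ab: "a < b" "p b < p a" by (auto simp: invs_def)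
  then have "(a,b) \<in> invs p" by (simp add: invs_def)
  then have abr: "(a,b) \<in> {1..Suc N} \<times> {1..Suc N}" using invs_sub[OF pp] by blast
  obtain c where c: "a \<le> c" "c < b" "p (Suc c) < p c"
    using descent_exists[OF permutes_inj[OF pp] ab] by blast
  have c1: "1 \<le> c" "Suc c \<le> Suc N" using c abr by auto
  define q where "q = p \<circ> st c"
  have qp: "q permutes {1..Suc N}" unfolding q_def
    using pp c1 by (intro permutes_compose permutes_swap_id) auto
  have "ninv q = (if p c < p (Suc c) then Suc (ninv p) else ninv p - 1)"
    unfolding q_def by (rule ninv_st(1)[OF pp c1])
  then have "ninv q = k" using c(3) kk by simp
  then obtain w where w: "set w \<subseteq> {1..N}" "word_perm w = q" "length w = k"
    using Suc.hyps(1)[of q] qp by metis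
  have "word_perm (w @ [c]) = p \<circ> (st c \<circ> st c)" using w(2) unfolding q_def wp_snoc
    by (simp only: o_assoc)
  then have "word_perm (w @ [c]) = p" by (simp only: st_st comp_id)
  moreover have "set (w @ [c]) \<subseteq> {1..N}" using w(1) c1 by auto
  moreover have "length (w @ [c]) = ninv p" using w(3) kk by simp
  ultimately show ?case by blast
qed



definition Lw :: "nat \<Rightarrow> nat list \<Rightarrow> nat list" where "Lw m u = filter (\<lambda>i. i \<le> m) u"
definition Hw :: "nat \<Rightarrow> nat list \<Rightarrow> nat list" where "Hw m u = map (\<lambda>i. i - m) (filter (\<lambda>i. \<not> i \<le> m) u)"
definition red :: "nat list \<Rightarrow> bool" where "red w \<longleftrightarrow> length w = ninv (word_perm w)"
definition Good :: "nat \<Rightarrow> nat list \<Rightarrow> bool" where "Good m u \<longleftrightarrow> red (Lw m u) \<and> red (Hw m u)"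
definition Dat :: "nat \<Rightarrow> nat list \<Rightarrow> (nat \<Rightarrow> nat) \<times> (nat \<Rightarrow> nat)" where
  "Dat m u = (word_perm (Lw m u), word_perm (Hw m u))"

lemma Lw_app[simp]: "Lw m (x @ y) = Lw m x @ Lw m y" by (simp add: Lw_def)
lemma Hw_app[simp]: "Hw m (x @ y) = Hw m x @ Hw m y" by (simp add: Hw_def)

lemma Lw_set: "set u \<subseteq> {1..N} \<Longrightarrow> set (Lw m u) \<subseteq> {1..N}" by (auto simp: Lw_def)
lemma Hw_set: assumes "set u \<subseteq> {1..N}" shows "set (Hw m u) \<subseteq> {1..N}"
proof
  fix x assume "x \<in> set (Hw m u)"
  then obtain y where y: "y \<in> set u" "\<not> y \<le> m" "x = y - m" by (auto simp: Hw_def)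
  then have "y \<le> N" using assms by auto
  then show "x \<in> {1..N}" using y by auto
qed

lemma wp_Cons: "word_perm (i # w) = st i \<circ> word_perm w"
  by (simp add: word_perm_def)

lemma st_cancel: "f \<circ> st a \<circ> st a = f"
  by (auto simp: fun_eq_iff transpose_def)

lemma wp_snoc2: "word_perm (z @ [a, b]) = word_perm z \<circ> st a \<circ> st b"
  by (auto simp: fun_eq_iff wp_append wp_Cons)

lemma wp_snoc3: "word_perm (z @ [a, b, c]) = word_perm z \<circ> st a \<circ> st b \<circ> st c"
  by (auto simp: fun_eq_iff wp_append wp_Cons)

lemma comm3: "Suc i < j \<or> Suc j < i \<Longrightarrow> f \<circ> st i \<circ> st j = f \<circ> st j \<circ> st i"
  by (metis st_comm o_assoc)

lemma braid3: "f \<circ> st i \<circ> st (Suc i) \<circ> st i = f \<circ> st (Suc i) \<circ> st i \<circ> st (Suc i)"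
  by (auto simp: fun_eq_iff transpose_def)

lemma red_prefix:
  assumes "set (a @ b) \<subseteq> {1..N}" "red (a @ b)" shows "red a"
proof -
  have sa: "set a \<subseteq> {1..N}" "set b \<subseteq> {1..N}" using assms(1) by auto
  have "ninv (word_perm a \<circ> word_perm b) \<le> ninv (word_perm a) + length b"
    using ninv_mono_aux[OF sa(2) wp_permutes[OF sa(1)]] by blast
  then have "length a + length b \<le> ninv (word_perm a) + length b"
    using assms(2) by (simp add: red_def wp_append)
  moreover have "ninv (word_perm a) \<le> length a" by (rule ninv_le_length[OF sa(1)])
  ultimately show ?thesis by (simp add: red_def)
qed

lemma red_repl:
  assumes "red (a @ c)" "red a" "red b" "word_perm b = word_perm a"
  shows "red (b @ c) \<and> word_perm (b @ c) = word_perm (a @ c)"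
proof -
  have "length b = length a" using assms(2-4) by (simp add: red_def)
  then show ?thesis using assms(1,4) by (simp add: red_def wp_append)
qed

lemma not_red_double:
  assumes "set c \<subseteq> {1..N}" shows "\<not> red (c @ [a, a])"
proof
  assume r: "red (c @ [a,a])"
  have "word_perm (c @ [a,a]) = word_perm c" by (simp only: wp_snoc2 st_cancel)
  then have "length c + 2 = ninv (word_perm c)" using r by (simp add: red_def)
  then show False using ninv_le_length[OF assms] by simp
qed

lemma Good_prefix:
  assumes "set (x @ z) \<subseteq> {1..N}" "Good m (x @ z)" shows "Good m x"
proof -
  have "set (Lw m x @ Lw m z) \<subseteq> {1..N}" using Lw_set[OF assms(1)] by simp
  moreover have "set (Hw m x @ Hw m z) \<subseteq> {1..N}" using Hw_set[OF assms(1)] by simp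
  ultimately show ?thesis using assms(2) red_prefix unfolding Good_def by (metis Lw_app Hw_app)
qed

lemma Good_repl:
  assumes "Good m (x @ z)" "Good m x" "Good m y" "Dat m y = Dat m x"
  shows "Good m (y @ z) \<and> Dat m (y @ z) = Dat m (x @ z)"
proof -
  have L: "red (Lw m y @ Lw m z) \<and> word_perm (Lw m y @ Lw m z) = word_perm (Lw m x @ Lw m z)"
    using assms by (intro red_repl) (auto simp: Good_def Dat_def)
  have H: "red (Hw m y @ Hw m z) \<and> word_perm (Hw m y @ Hw m z) = word_perm (Hw m x @ Hw m z)"
    using assms by (intro red_repl) (auto simp: Good_def Dat_def)
  show ?thesis using L H by (simp add: Good_def Dat_def)
qed

lemma red_comm:
  assumes "red (c @ [a, b])" "Suc a < b \<or> Suc b < a"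
  shows "red (c @ [b, a]) \<and> word_perm (c @ [b, a]) = word_perm (c @ [a, b])"
proof -
  have "word_perm (c @ [b, a]) = word_perm (c @ [a, b])"
    unfolding wp_snoc2 using comm3 assms(2) by metis
  then show ?thesis using assms(1) by (simp add: red_def)
qed

lemma Good_comm:
  assumes "Good m (z @ [j, i])" "Suc i < j \<or> Suc j < i"
  shows "Good m (z @ [i, j]) \<and> Dat m (z @ [i, j]) = Dat m (z @ [j, i])"
proof -
  have L: "red (Lw m (z @ [i, j])) \<and> word_perm (Lw m (z @ [i, j])) = word_perm (Lw m (z @ [j, i]))"
  proof (cases "i \<le> m \<and> j \<le> m")
    case True
    then have "red (Lw m z @ [j, i])" using assms(1) by (simp add: Good_def Lw_def)
    from red_comm[OF this] assms(2) True show ?thesis by (auto simp: Lw_def)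
  next
    case False
    then have "Lw m (z @ [i, j]) = Lw m (z @ [j, i])" by (auto simp: Lw_def)
    then show ?thesis using assms(1) by (simp add: Good_def)
  qed
  have H: "red (Hw m (z @ [i, j])) \<and> word_perm (Hw m (z @ [i, j])) = word_perm (Hw m (z @ [j, i]))"
  proof (cases "\<not> i \<le> m \<and> \<not> j \<le> m")
    case True
    then have "red (Hw m z @ [j - m, i - m])" using assms(1) by (simp add: Good_def Hw_def)
    moreover have "Suc (j - m) < i - m \<or> Suc (i - m) < j - m" using True assms(2) by auto
    ultimately have "red (Hw m z @ [i - m, j - m]) \<and> word_perm (Hw m z @ [i - m, j - m]) = word_perm (Hw m z @ [j - m, i - m])"
      using red_comm by blast
    then show ?thesis using True by (auto simp: Hw_def)
  next
    case False
    then have "Hw m (z @ [i, j]) = Hw m (z @ [j, i])" by (auto simp: Hw_def)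
    then show ?thesis using assms(1) by (simp add: Good_def)
  qed
  show ?thesis using L H by (simp add: Good_def Dat_def)
qed

lemma Good_braid:
  assumes z: "set z \<subseteq> {1..N}" and g: "Good m (z @ [i, Suc i, i]) \<or> Good m (z @ [Suc i, i, Suc i])"
  shows "Good m (z @ [i, Suc i, i]) \<and> Good m (z @ [Suc i, i, Suc i])
      \<and> Dat m (z @ [i, Suc i, i]) = Dat m (z @ [Suc i, i, Suc i])"
proof -
  have wb: "word_perm (c @ [a, Suc a, a]) = word_perm (c @ [Suc a, a, Suc a])" for c a
    unfolding wp_snoc3 by (rule braid3)
  consider "Suc i \<le> m" | "i = m" | "m < i" by linarith
  then show ?thesis
  proof cases
    case 1
    then have "Lw m (z @ [i, Suc i, i]) = Lw m z @ [i, Suc i, i]"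
      "Lw m (z @ [Suc i, i, Suc i]) = Lw m z @ [Suc i, i, Suc i]"
      "Hw m (z @ [i, Suc i, i]) = Hw m z" "Hw m (z @ [Suc i, i, Suc i]) = Hw m z"
      by (auto simp: Lw_def Hw_def)
    then show ?thesis using g wb[of "Lw m z" i] by (auto simp: Good_def Dat_def red_def)
  next
    case 2
    then have "Lw m (z @ [i, Suc i, i]) = Lw m z @ [i, i]"
      "Hw m (z @ [Suc i, i, Suc i]) = Hw m z @ [1, 1]"
      by (auto simp: Lw_def Hw_def)
    moreover have "\<not> red (Lw m z @ [i, i])" using not_red_double[OF Lw_set[OF z]] .
    moreover have "\<not> red (Hw m z @ [1, 1])" using not_red_double[OF Hw_set[OF z]] .
    ultimately show ?thesis using g by (auto simp: Good_def)
  next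
    case 3
    then have "Hw m (z @ [i, Suc i, i]) = Hw m z @ [i - m, Suc (i - m), i - m]"
      "Hw m (z @ [Suc i, i, Suc i]) = Hw m z @ [Suc (i - m), i - m, Suc (i - m)]"
      "Lw m (z @ [i, Suc i, i]) = Lw m z" "Lw m (z @ [Suc i, i, Suc i]) = Lw m z"
      by (auto simp: Lw_def Hw_def Suc_diff_le)
    then show ?thesis using g wb[of "Hw m z" "i - m"] by (auto simp: Good_def Dat_def red_def)
  qed
qed



lemma desc_last:
  assumes u: "set (x @ [i]) \<subseteq> {1..N}" and r: "red (x @ [i])"
  shows "red x" "ninv (word_perm x) + 1 = ninv (word_perm (x @ [i]))"
    "word_perm (x @ [i]) (Suc i) < word_perm (x @ [i]) i"
    "word_perm x = word_perm (x @ [i]) \<circ> st i"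
proof -
  show rx: "red x" using red_prefix[OF u r] .
  have sx: "set x \<subseteq> {1..N}" and i: "1 \<le> i" "Suc i \<le> Suc N" using u by auto
  have pp: "word_perm x permutes {1..Suc N}" by (rule wp_permutes[OF sx])
  show e: "ninv (word_perm x) + 1 = ninv (word_perm (x @ [i]))"
    using rx r by (simp add: red_def)
  have "ninv (word_perm (x @ [i])) = (if word_perm x i < word_perm x (Suc i) then Suc (ninv (word_perm x)) else ninv (word_perm x) - 1)"
    unfolding wp_snoc by (rule ninv_st(1)[OF pp i])
  then have "word_perm x i < word_perm x (Suc i)" using e by (auto split: if_splits)
  then show "word_perm (x @ [i]) (Suc i) < word_perm (x @ [i]) i"
    by (simp add: wp_snoc transpose_def)
  show "word_perm x = word_perm (x @ [i]) \<circ> st i"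
    by (simp only: wp_snoc st_cancel)
qed

lemma comm_desc:
  assumes p: "p permutes {1..Suc N}" and ij: "i \<in> {1..N}" "j \<in> {1..N}" "Suc i < j \<or> Suc j < i"
    and di: "p (Suc i) < p i" and dj: "p (Suc j) < p j"
  shows "\<exists>z. set z \<subseteq> {1..N} \<and> word_perm z = p \<circ> st i \<circ> st j \<and> length z + 2 = ninv p"
proof -
  have i1: "1 \<le> i" "Suc i \<le> Suc N" and j1: "1 \<le> j" "Suc j \<le> Suc N" using ij by auto
  define p1 where "p1 = p \<circ> st i"
  have p1p: "p1 permutes {1..Suc N}" unfolding p1_def using p i1 by (intro permutes_compose permutes_swap_id) auto
  have n1: "ninv p1 = ninv p - 1" "ninv p \<ge> 1"
    using ninv_st[OF p i1] di unfolding p1_def by auto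
  have "p1 j = p j" "p1 (Suc j) = p (Suc j)" unfolding p1_def using ij(3) by (auto simp: transpose_def)
  then have dj1: "p1 (Suc j) < p1 j" using dj by simp
  define p2 where "p2 = p1 \<circ> st j"
  have p2p: "p2 permutes {1..Suc N}" unfolding p2_def using p1p j1 by (intro permutes_compose permutes_swap_id) auto
  have n2: "ninv p2 = ninv p1 - 1" "ninv p1 \<ge> 1"
    using ninv_st[OF p1p j1] dj1 unfolding p2_def by auto
  obtain z where z: "set z \<subseteq> {1..N}" "word_perm z = p2" "length z = ninv p2"
    using exists_red_word[OF p2p] by blast
  show ?thesis using z n1 n2 unfolding p2_def p1_def by (intro exI[of _ z]) auto
qed

lemma braid_desc:
  assumes p: "p permutes {1..Suc N}" and i: "i \<in> {1..N}" "Suc i \<in> {1..N}"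
    and d1: "p (Suc i) < p i" and d2: "p (Suc (Suc i)) < p (Suc i)"
  shows "\<exists>z. set z \<subseteq> {1..N} \<and> word_perm z = p \<circ> st i \<circ> st (Suc i) \<circ> st i \<and> length z + 3 = ninv p"
proof -
  have i1: "1 \<le> i" "Suc i \<le> Suc N" and j1: "1 \<le> Suc i" "Suc (Suc i) \<le> Suc N" using i by auto
  define p1 where "p1 = p \<circ> st i"
  have p1p: "p1 permutes {1..Suc N}" unfolding p1_def using p i1 by (intro permutes_compose permutes_swap_id) auto
  have n1: "ninv p1 = ninv p - 1" "ninv p \<ge> 1"
    using ninv_st[OF p i1] d1 unfolding p1_def by auto
  have "p1 (Suc i) = p i" "p1 (Suc (Suc i)) = p (Suc (Suc i))" unfolding p1_def by (auto simp: transpose_def)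
  then have dj1: "p1 (Suc (Suc i)) < p1 (Suc i)" using d1 d2 by simp
  define p2 where "p2 = p1 \<circ> st (Suc i)"
  have p2p: "p2 permutes {1..Suc N}" unfolding p2_def using p1p j1 by (intro permutes_compose permutes_swap_id) auto
  have n2: "ninv p2 = ninv p1 - 1" "ninv p1 \<ge> 1"
    using ninv_st[OF p1p j1] dj1 unfolding p2_def by auto
  have "p2 i = p (Suc i)" "p2 (Suc i) = p (Suc (Suc i))" unfolding p2_def p1_def by (auto simp: transpose_def)
  then have d3: "p2 (Suc i) < p2 i" using d2 by simp
  define p3 where "p3 = p2 \<circ> st i"
  have p3p: "p3 permutes {1..Suc N}" unfolding p3_def using p2p i1 by (intro permutes_compose permutes_swap_id) auto
  have n3: "ninv p3 = ninv p2 - 1" "ninv p2 \<ge> 1"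
    using ninv_st[OF p2p i1] d3 unfolding p3_def by auto
  obtain z where z: "set z \<subseteq> {1..N}" "word_perm z = p3" "length z = ninv p3"
    using exists_red_word[OF p3p] by blast
  show ?thesis using z n1 n2 n3 unfolding p3_def p2_def p1_def by (intro exI[of _ z]) auto
qed



lemma main_b:
  "\<forall>u u'. length u = k \<longrightarrow> set u \<subseteq> {1..N} \<longrightarrow> set u' \<subseteq> {1..N} \<longrightarrow> red u \<longrightarrow> red u'
     \<longrightarrow> word_perm u' = word_perm u \<longrightarrow> Good m u \<longrightarrow> Good m u' \<and> Dat m u' = Dat m u"
proof (induction k rule: less_induct)
  case (less k)
  have IH: "\<And>a b. length a < k \<Longrightarrow> set a \<subseteq> {1..N} \<Longrightarrow> set b \<subseteq> {1..N} \<Longrightarrow> red a \<Longrightarrow> red b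
      \<Longrightarrow> word_perm b = word_perm a \<Longrightarrow> Good m a \<Longrightarrow> Good m b \<and> Dat m b = Dat m a"
    using less.IH by blast
  show ?case
  proof (intro allI impI)
    fix u u' assume H: "length u = k" "set u \<subseteq> {1..N}" "set u' \<subseteq> {1..N}" "red u" "red u'"
      "word_perm u' = word_perm u" "Good m u"
    define p where "p = word_perm u"
    have lu': "length u' = length u" using H(4,5,6) by (simp add: red_def)
    show "Good m u' \<and> Dat m u' = Dat m u"
    proof (cases "u = []")
      case True then have "u' = []" using lu' by simp
      then show ?thesis using True H by simp
    next
      case False
      obtain x i where ux: "u = x @ [i]" using False by (metis rev_exhaust)
      obtain y j where uy: "u' = y @ [j]" using False lu' by (metis length_0_conv rev_exhaust)
      have sx: "set (x @ [i]) \<subseteq> {1..N}" using H(2) ux by simp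
      have sy: "set (y @ [j]) \<subseteq> {1..N}" using H(3) uy by simp
      have rxi: "red (x @ [i])" using H(4) ux by simp
      have ryj: "red (y @ [j])" using H(5) uy by simp
      have pu: "word_perm (x @ [i]) = p" using ux p_def by simp
      have pu': "word_perm (y @ [j]) = p" using uy H(6) p_def by simp
      have rx: "red x" and nx: "ninv (word_perm x) + 1 = ninv p" and dix: "p (Suc i) < p i"
        and wx: "word_perm x = p \<circ> st i"
        using desc_last[OF sx rxi] unfolding pu by auto
      have ry: "red y" and ny: "ninv (word_perm y) + 1 = ninv p" and djy: "p (Suc j) < p j"
        and wy: "word_perm y = p \<circ> st j"
        using desc_last[OF sy ryj] unfolding pu' by auto
      have lx: "length x < k" using H(1) ux by simp
      have ly: "length y < k" using H(1) lu' ux uy by simp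
      have lxp: "length x + 1 = ninv p" using rx nx by (simp add: red_def)
      have pp: "p permutes {1..Suc N}" unfolding p_def by (rule wp_permutes[OF H(2)])
      have sx': "set x \<subseteq> {1..N}" and sy': "set y \<subseteq> {1..N}" and ii: "i \<in> {1..N}" and jj: "j \<in> {1..N}"
        using sx sy by auto
      have Gu: "Good m (x @ [i])" using H(7) ux by simp
      have Gx: "Good m x" using Good_prefix[OF sx Gu] .
      have goal: "Good m (y @ [j]) \<and> Dat m (y @ [j]) = Dat m (x @ [i])"
      proof -
        consider (eq) "i = j" | (cm) "Suc i < j \<or> Suc j < i" | (b1) "j = Suc i" | (b2) "i = Suc j"
          by linarith
        then show ?thesis
        proof cases
          case eq
          have "Good m y \<and> Dat m y = Dat m x"
            using IH[OF lx sx' sy' rx ry] wx wy eq Gx by simp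
          then show ?thesis using Good_repl[OF Gu Gx] eq by blast
        next
          case cm
          obtain z where z: "set z \<subseteq> {1..N}" "word_perm z = p \<circ> st i \<circ> st j" "length z + 2 = ninv p"
            using comm_desc[OF pp ii jj cm dix djy] by blast
          have w1: "word_perm (z @ [j]) = word_perm x"
            unfolding wp_snoc z(2) wx by (rule st_cancel)
          have r1: "red (z @ [j])" using w1 z(3) lxp rx by (simp add: red_def)
          have G1: "Good m (z @ [j]) \<and> Dat m (z @ [j]) = Dat m x"
            using IH[OF lx sx' _ rx r1 w1 Gx] z(1) jj by simp
          have G2: "Good m (z @ [j, i]) \<and> Dat m (z @ [j, i]) = Dat m (x @ [i])"
            using Good_repl[OF Gu Gx, of "z @ [j]"] G1 by simp
          have G3: "Good m (z @ [i, j]) \<and> Dat m (z @ [i, j]) = Dat m (z @ [j, i])"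
            using Good_comm[OF _ cm] G2 by blast
          have G4: "Good m (z @ [i])"
            using Good_prefix[of "z @ [i]" "[j]" N m] G3 z(1) ii jj by simp
          have w2: "word_perm (z @ [i]) = word_perm y"
            unfolding wp_snoc z(2) wy comm3[OF cm] by (rule st_cancel)
          have r2: "red (z @ [i])" using w2 z(3) ny ry by (simp add: red_def)
          have G5: "Good m y \<and> Dat m y = Dat m (z @ [i])"
            using IH[OF _ _ sy' r2 ry w2[symmetric] G4] z(1) ii z(3) lxp lx by simp
          have "Good m (y @ [j]) \<and> Dat m (y @ [j]) = Dat m (z @ [i] @ [j])"
            using Good_repl[of m "z @ [i]" "[j]" y] G3 G4 G5 by simp
          then show ?thesis using G3 G2 by simp
        next
          case b1
          have jN: "Suc i \<in> {1..N}" using jj b1 by simp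
          obtain z where z: "set z \<subseteq> {1..N}" "word_perm z = p \<circ> st i \<circ> st (Suc i) \<circ> st i"
              "length z + 3 = ninv p"
            using braid_desc[OF pp ii jN dix] djy b1 by blast
          have w1: "word_perm (z @ [i, Suc i]) = word_perm x"
            unfolding wp_snoc2 z(2) wx st_cancel by (rule refl)
          have r1: "red (z @ [i, Suc i])" using w1 z(3) lxp rx by (simp add: red_def)
          have G1: "Good m (z @ [i, Suc i]) \<and> Dat m (z @ [i, Suc i]) = Dat m x"
            using IH[OF lx sx' _ rx r1 w1 Gx] z(1) ii jN by simp
          have G2: "Good m (z @ [i, Suc i, i]) \<and> Dat m (z @ [i, Suc i, i]) = Dat m (x @ [i])"
            using Good_repl[OF Gu Gx, of "z @ [i, Suc i]"] G1 by simp
          have G3: "Good m (z @ [Suc i, i, Suc i]) \<and> Dat m (z @ [i, Suc i, i]) = Dat m (z @ [Suc i, i, Suc i])"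
            using Good_braid[OF z(1)] G2 by blast
          have G4: "Good m (z @ [Suc i, i])"
            using Good_prefix[of "z @ [Suc i, i]" "[Suc i]" N m] G3 z(1) ii jN by simp
          have w2: "word_perm (z @ [Suc i, i]) = word_perm y"
            unfolding wp_snoc2 z(2) wy braid3 st_cancel b1 by (rule refl)
          have r2: "red (z @ [Suc i, i])" using w2 z(3) ny ry by (simp add: red_def)
          have G5: "Good m y \<and> Dat m y = Dat m (z @ [Suc i, i])"
            using IH[OF _ _ sy' r2 ry w2[symmetric] G4] z(1) ii jN z(3) lxp lx by simp
          have "Good m (y @ [j]) \<and> Dat m (y @ [j]) = Dat m ((z @ [Suc i, i]) @ [j])"
            using Good_repl[of m "z @ [Suc i, i]" "[j]" y] G3 G4 G5 b1 by simp
          then show ?thesis using G3 G2 b1 by simp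
        next
          case b2
          have jN: "Suc j \<in> {1..N}" using ii b2 by simp
          obtain z where z: "set z \<subseteq> {1..N}" "word_perm z = p \<circ> st j \<circ> st (Suc j) \<circ> st j"
              "length z + 3 = ninv p"
            using braid_desc[OF pp jj jN djy] dix b2 by blast
          have w1: "word_perm (z @ [Suc j, j]) = word_perm x"
            unfolding wp_snoc2 z(2) wx braid3 st_cancel b2 by (rule refl)
          have r1: "red (z @ [Suc j, j])" using w1 z(3) lxp rx by (simp add: red_def)
          have G1: "Good m (z @ [Suc j, j]) \<and> Dat m (z @ [Suc j, j]) = Dat m x"
            using IH[OF lx sx' _ rx r1 w1 Gx] z(1) jj jN by simp
          have G2: "Good m (z @ [Suc j, j, Suc j]) \<and> Dat m (z @ [Suc j, j, Suc j]) = Dat m (x @ [i])"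
            using Good_repl[OF Gu Gx, of "z @ [Suc j, j]"] G1 b2 by simp
          have G3: "Good m (z @ [j, Suc j, j]) \<and> Dat m (z @ [j, Suc j, j]) = Dat m (z @ [Suc j, j, Suc j])"
            using Good_braid[OF z(1)] G2 by blast
          have G4: "Good m (z @ [j, Suc j])"
            using Good_prefix[of "z @ [j, Suc j]" "[j]" N m] G3 z(1) jj jN by simp
          have w2: "word_perm (z @ [j, Suc j]) = word_perm y"
            unfolding wp_snoc2 z(2) wy st_cancel by (rule refl)
          have r2: "red (z @ [j, Suc j])" using w2 z(3) ny ry by (simp add: red_def)
          have G5: "Good m y \<and> Dat m y = Dat m (z @ [j, Suc j])"
            using IH[OF _ _ sy' r2 ry w2[symmetric] G4] z(1) jj jN z(3) lxp lx by simp
          have "Good m (y @ [j]) \<and> Dat m (y @ [j]) = Dat m ((z @ [j, Suc j]) @ [j])"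
            using Good_repl[of m "z @ [j, Suc j]" "[j]" y] G3 G4 G5 by simp
          then show ?thesis using G3 G2 by simp
        qed
      qed
      then show ?thesis using ux uy by simp
    qed
  qed
qed

lemma good_red: "set u \<subseteq> {1..N} \<Longrightarrow> Good m u \<Longrightarrow> red u"
proof (induction u rule: rev_induct)
  case Nil then show ?case by (simp add: red_def)
next
  case (snoc i x)
  have sx: "set x \<subseteq> {1..N}" and i: "1 \<le> i" "Suc i \<le> Suc N" using snoc.prems by auto
  have Gx: "Good m x" using Good_prefix[OF snoc.prems] .
  have rx: "red x" using snoc.IH[OF sx Gx] .
  have pp: "word_perm x permutes {1..Suc N}" by (rule wp_permutes[OF sx])
  have e: "ninv (word_perm (x @ [i])) = (if word_perm x i < word_perm x (Suc i) then Suc (ninv (word_perm x)) else ninv (word_perm x) - 1)"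
    unfolding wp_snoc by (rule ninv_st(1)[OF pp i])
  show ?case
  proof (cases "word_perm x i < word_perm x (Suc i)")
    case True then show ?thesis using e rx by (simp add: red_def)
  next
    case False
    have "word_perm x i \<noteq> word_perm x (Suc i)" using permutes_inj[OF pp] by (metis injD n_not_Suc_n)
    then have d: "word_perm x (Suc i) < word_perm x i" using False by simp
    have n1: "ninv (word_perm x) \<ge> 1" using ninv_st(2)[OF pp i d] .
    have qp: "word_perm x \<circ> st i permutes {1..Suc N}" using pp i by (intro permutes_compose permutes_swap_id) auto
    have nq: "ninv (word_perm x \<circ> st i) = ninv (word_perm x) - 1" using ninv_st(1)[OF pp i] d by simp
    obtain z where z: "set z \<subseteq> {1..N}" "word_perm z = word_perm x \<circ> st i" "length z = ninv (word_perm x \<circ> st i)"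
      using exists_red_word[OF qp] by blast
    have w: "word_perm (z @ [i]) = word_perm x" unfolding wp_snoc z(2) by (rule st_cancel)
    have r: "red (z @ [i])" using w z(3) nq n1 by (simp add: red_def)
    have szi: "set (z @ [i]) \<subseteq> {1..N}" using z(1) i by auto
    have G: "Good m (z @ [i]) \<and> Dat m (z @ [i]) = Dat m x"
      using main_b[of "length x" N m] sx szi rx r w Gx by blast
    have "Good m (z @ [i] @ [i])" using Good_repl[of m x "[i]" "z @ [i]"] snoc.prems(2) Gx G by simp
    then have G2: "Good m (z @ [i, i])" by simp
    show ?thesis
    proof (cases "i \<le> m")
      case True
      then have "Lw m (z @ [i, i]) = Lw m z @ [i, i]" by (simp add: Lw_def)
      then show ?thesis using G2 not_red_double[OF Lw_set[OF z(1)]] by (simp add: Good_def)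
    next
      case False
      then have "Hw m (z @ [i, i]) = Hw m z @ [i - m, i - m]" by (simp add: Hw_def)
      then show ?thesis using G2 not_red_double[OF Hw_set[OF z(1)]] by (simp add: Good_def)
    qed
  qed
qed



abbreviation lk where "lk \<equiv> Poly_Mapping.lookup"
abbreviation ks where "ks \<equiv> Poly_Mapping.keys"
abbreviation sg where "sg \<equiv> Poly_Mapping.single"

lemma lookup_pm_smult[simp]: "lk (pm_smult c p) k = c * lk p k"
  unfolding pm_smult_def Poly_Mapping.map.rep_eq when_def by simp
interpretation pmm: module "pm_smult :: 'k::field \<Rightarrow> ('a \<Rightarrow>\<^sub>0 'k) \<Rightarrow> ('a \<Rightarrow>\<^sub>0 'k)"
  by standard (auto intro!: poly_mapping_eqI simp: lookup_add algebra_simps)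
lemma lin_span_eq: "lin_span = pmm.span"
  by (simp add: lin_span_def fun_eq_iff)

lemma keys_pm_smult: "ks (pm_smult c p) \<subseteq> ks p"
  by (auto simp: in_keys_iff)

definition ind :: "'a set \<Rightarrow> 'a \<Rightarrow>\<^sub>0 'k::field" where
  "ind S = (\<Sum>x\<in>S. sg x 1)"

lemma lookup_ind: "finite S \<Longrightarrow> lk (ind S) y = (if y \<in> S then 1 else 0)"
  unfolding ind_def lookup_sum lookup_single when_def
  by (simp add: sum.delta)

lemma keys_ind: "finite S \<Longrightarrow> ks (ind S :: 'a \<Rightarrow>\<^sub>0 'k::field) = S"
  by (auto simp: in_keys_iff lookup_ind split: if_splits)

lemma ind_UN: "finite I \<Longrightarrow> (\<And>i. i \<in> I \<Longrightarrow> finite (A i)) \<Longrightarrow>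
   (\<And>i j. i \<in> I \<Longrightarrow> j \<in> I \<Longrightarrow> i \<noteq> j \<Longrightarrow> A i \<inter> A j = {}) \<Longrightarrow>
   (ind (\<Union>i\<in>I. A i) :: 'a \<Rightarrow>\<^sub>0 'k::field) = (\<Sum>i\<in>I. ind (A i))"
  unfolding ind_def by (rule sum.UNION_disjoint) auto

lemma ind_image: "inj_on f A \<Longrightarrow> (ind (f ` A) :: 'a \<Rightarrow>\<^sub>0 'k::field) = (\<Sum>x\<in>A. sg (f x) 1)"
  unfolding ind_def by (simp add: sum.reindex)

lemma Rchar: "w \<in> reduced_words N p \<longleftrightarrow> set w \<subseteq> {1..N} \<and> word_perm w = p \<and> red w"
proof
  assume w: "w \<in> reduced_words N p"
  then have s: "set w \<subseteq> {1..N}" and e: "word_perm w = p"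
    and m: "\<And>u. is_word_for N p u \<Longrightarrow> length w \<le> length u"
    by (auto simp: reduced_words_def is_word_for_def)
  have pp: "p permutes {1..Suc N}" using wp_permutes[OF s] e by simp
  obtain w0 where w0: "set w0 \<subseteq> {1..N}" "word_perm w0 = p" "length w0 = ninv p"
    using exists_red_word[OF pp] by blast
  have "length w \<le> ninv p" using m[of w0] w0 by (simp add: is_word_for_def)
  moreover have "ninv p \<le> length w" using ninv_le_length[OF s] e by simp
  ultimately show "set w \<subseteq> {1..N} \<and> word_perm w = p \<and> red w" using s e by (simp add: red_def)
next
  assume H: "set w \<subseteq> {1..N} \<and> word_perm w = p \<and> red w"
  have "length w \<le> length u" if "is_word_for N p u" for u
    using that ninv_le_length[of u N] H by (auto simp: is_word_for_def red_def)
  then show "w \<in> reduced_words N p" using H by (simp add: reduced_words_def is_word_for_def)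
qed

lemma finite_R: "finite (reduced_words N p)"
proof (rule finite_subset)
  show "reduced_words N p \<subseteq> {w. set w \<subseteq> {1..N} \<and> length w = ninv p}"
  proof
    fix w assume "w \<in> reduced_words N p"
    then show "w \<in> {w. set w \<subseteq> {1..N} \<and> length w = ninv p}"
      using Rchar[of w N p] unfolding red_def by blast
  qed
  show "finite {w. set w \<subseteq> {1..N} \<and> length w = ninv p}"
    by (rule finite_lists_length_eq) simp
qed

lemma R_len: "w \<in> reduced_words N p \<Longrightarrow> length w = ninv p"
  by (auto simp: Rchar red_def)

lemma R_split:
  assumes "a @ b \<in> reduced_words N p"
  shows "a \<in> reduced_words N (word_perm a) \<and> b \<in> reduced_words N (word_perm b)"
proof -
  have s: "set (a @ b) \<subseteq> {1..N}" and e: "word_perm (a @ b) = p"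
    and m: "\<And>u. is_word_for N p u \<Longrightarrow> length (a @ b) \<le> length u"
    using assms by (auto simp: reduced_words_def is_word_for_def)
  have A: "length a \<le> length u" if "is_word_for N (word_perm a) u" for u
  proof -
    have "is_word_for N p (u @ b)" using that s e by (auto simp: is_word_for_def wp_append)
    then show ?thesis using m by fastforce
  qed
  have B: "length b \<le> length u" if "is_word_for N (word_perm b) u" for u
  proof -
    have "is_word_for N p (a @ u)" using that s e by (auto simp: is_word_for_def wp_append)
    then show ?thesis using m by fastforce
  qed
  show ?thesis using A B s by (auto simp: reduced_words_def is_word_for_def)
qed

lemma R_join:
  assumes "a \<in> reduced_words N (word_perm a0)" "b \<in> reduced_words N (word_perm b0)"
    "a0 @ b0 \<in> reduced_words N p"
  shows "a @ b \<in> reduced_words N p"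
proof -
  have sp: "a0 \<in> reduced_words N (word_perm a0)" "b0 \<in> reduced_words N (word_perm b0)"
    using R_split[OF assms(3)] by auto
  have la: "length a = length a0" using R_len assms(1) sp(1) by metis
  have lb: "length b = length b0" using R_len assms(2) sp(2) by metis
  have "word_perm (a @ b) = p" using assms(1,2,3)
    by (auto simp: reduced_words_def is_word_for_def wp_append)
  then show ?thesis using assms(1,2,3) la lb
    by (auto simp: reduced_words_def is_word_for_def)
qed

lemma perm_elt_ind: "perm_elt N p = ind ((\<lambda>w. (w, N)) ` reduced_words N p)"
  unfolding perm_elt_def W_basis_def ind_def by (subst sum.reindex) (auto simp: inj_on_def)

definition Sh :: "(nat \<Rightarrow> bool) \<Rightarrow> nat list \<Rightarrow> nat list \<Rightarrow> nat list set" where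
  "Sh P a b = {u. filter P u = a \<and> filter (\<lambda>x. \<not> P x) u = b}"

lemma shuffle_Sh:
  "(\<forall>x\<in>set a. P x) \<Longrightarrow> (\<forall>x\<in>set b. \<not> P x) \<Longrightarrow> finite (Sh P a b) \<and> shuffle_ms a b = mset_set (Sh P a b)"
proof (induction a b rule: shuffle_ms.induct)
  case (1 ys)
  have "Sh P [] ys = {ys}"
  proof
    show "Sh P [] ys \<subseteq> {ys}"
    proof
      fix u assume "u \<in> Sh P [] ys"
      then have "filter P u = []" "filter (\<lambda>x. \<not> P x) u = ys" by (auto simp: Sh_def)
      then show "u \<in> {ys}" by (simp add: filter_empty_conv filter_id_conv)
    qed
    show "{ys} \<subseteq> Sh P [] ys" using 1 by (auto simp: Sh_def filter_empty_conv filter_id_conv)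
  qed
  then show ?case by simp
next
  case (2 x xs)
  have "Sh P (x # xs) [] = {x # xs}"
  proof
    show "Sh P (x # xs) [] \<subseteq> {x # xs}"
    proof
      fix u assume "u \<in> Sh P (x # xs) []"
      then have "filter P u = x # xs" "filter (\<lambda>x. \<not> P x) u = []" by (auto simp: Sh_def)
      then show "u \<in> {x # xs}" by (simp add: filter_empty_conv filter_id_conv)
    qed
    show "{x # xs} \<subseteq> Sh P (x # xs) []" using 2 by (auto simp: Sh_def filter_empty_conv filter_id_conv)
  qed
  then show ?case by simp
next
  case (3 x xs y ys)
  have Px: "P x" "\<forall>z\<in>set xs. P z" and Py: "\<not> P y" "\<forall>z\<in>set ys. \<not> P z" using 3(3,4) by auto
  have IH1: "finite (Sh P xs (y # ys)) \<and> shuffle_ms xs (y # ys) = mset_set (Sh P xs (y # ys))"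
    using 3(1) Px Py 3(4) by simp
  have IH2: "finite (Sh P (x # xs) ys) \<and> shuffle_ms (x # xs) ys = mset_set (Sh P (x # xs) ys)"
    using 3(2) Px Py 3(3) by simp
  have eq: "Sh P (x # xs) (y # ys) = (#) x ` Sh P xs (y # ys) \<union> (#) y ` Sh P (x # xs) ys"
  proof
    show "Sh P (x # xs) (y # ys) \<subseteq> (#) x ` Sh P xs (y # ys) \<union> (#) y ` Sh P (x # xs) ys"
    proof
      fix u assume u: "u \<in> Sh P (x # xs) (y # ys)"
      then have f1: "filter P u = x # xs" and f2: "filter (\<lambda>x. \<not> P x) u = y # ys" by (auto simp: Sh_def)
      then obtain c r where ucr: "u = c # r" by (cases u) auto
      show "u \<in> (#) x ` Sh P xs (y # ys) \<union> (#) y ` Sh P (x # xs) ys"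
      proof (cases "P c")
        case True
        then have "c = x" "filter P r = xs" "filter (\<lambda>x. \<not> P x) r = y # ys" using f1 f2 ucr by auto
        then have "r \<in> Sh P xs (y # ys)" "u = x # r" using ucr by (simp_all add: Sh_def)
        then show ?thesis by blast
      next
        case False
        then have "c = y" "filter P r = x # xs" "filter (\<lambda>x. \<not> P x) r = ys" using f1 f2 ucr by auto
        then have "r \<in> Sh P (x # xs) ys" "u = y # r" using ucr by (simp_all add: Sh_def)
        then show ?thesis by blast
      qed
    qed
    show "(#) x ` Sh P xs (y # ys) \<union> (#) y ` Sh P (x # xs) ys \<subseteq> Sh P (x # xs) (y # ys)"
    proof
      fix u assume "u \<in> (#) x ` Sh P xs (y # ys) \<union> (#) y ` Sh P (x # xs) ys"
      then consider r where "u = x # r" "r \<in> Sh P xs (y # ys)" | r where "u = y # r" "r \<in> Sh P (x # xs) ys"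
        by blast
      then show "u \<in> Sh P (x # xs) (y # ys)"
      proof cases
        case 1 then show ?thesis using Px(1) by (simp add: Sh_def)
      next
        case 2 then show ?thesis using Py(1) by (simp add: Sh_def)
      qed
    qed
  qed
  have "x \<noteq> y" using Px Py by auto
  then have disj: "(#) x ` Sh P xs (y # ys) \<inter> (#) y ` Sh P (x # xs) ys = {}"
    by blast
  have fin: "finite (Sh P (x # xs) (y # ys))" unfolding eq using IH1 IH2 by simp
  have "shuffle_ms (x # xs) (y # ys) = mset_set ((#) x ` Sh P xs (y # ys)) + mset_set ((#) y ` Sh P (x # xs) ys)"
    using IH1 IH2 by (simp add: image_mset_mset_set)
  also have "\<dots> = mset_set (Sh P (x # xs) (y # ys))"
    unfolding eq using IH1 IH2 disj by (simp add: mset_set_Union)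
  finally show ?case using fin by simp
qed



lemma sum_keys: fixes a :: "'a \<Rightarrow>\<^sub>0 'k::field" shows "finite A \<Longrightarrow> ks a \<subseteq> A \<Longrightarrow> (\<Sum>x\<in>ks a. lk a x * g x) = (\<Sum>x\<in>A. lk a x * g x)"
  by (rule sum.mono_neutral_left) (auto simp: in_keys_iff)

lemma lk_W_mult:
  assumes fA: "finite A" and fB: "finite B" and sA: "ks a \<subseteq> A" and sB: "ks b \<subseteq> B"
  shows "lk (W_mult a b) k = (\<Sum>x\<in>A. lk a x * (\<Sum>y\<in>B. lk b y * lk (W_mult_basis x y) k))"
proof -
  have "lk (W_mult a b) k = (\<Sum>x\<in>ks a. lk a x * (\<Sum>y\<in>ks b. lk b y * lk (W_mult_basis x y) k))"
    by (simp add: W_mult_def lookup_sum sum_distrib_left mult.assoc)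
  also have "\<dots> = (\<Sum>x\<in>ks a. lk a x * (\<Sum>y\<in>B. lk b y * lk (W_mult_basis x y) k))"
    using sum_keys[OF fB sB] by simp
  also have "\<dots> = (\<Sum>x\<in>A. lk a x * (\<Sum>y\<in>B. lk b y * lk (W_mult_basis x y) k))"
    by (rule sum_keys[OF fA sA])
  finally show ?thesis .
qed

lemma W_mult_lin1: "W_mult (pm_smult c a + a') b = pm_smult c (W_mult a b) + W_mult a' b"
proof (rule poly_mapping_eqI)
  fix k
  define A where "A = ks a \<union> ks a'"
  have fA: "finite A" unfolding A_def by simp
  have s1: "ks (pm_smult c a + a') \<subseteq> A" using keys_add[of "pm_smult c a" a'] keys_pm_smult[of c a]
    unfolding A_def by blast
  have s2: "ks a \<subseteq> A" "ks a' \<subseteq> A" unfolding A_def by auto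
  define S where "S x = (\<Sum>y\<in>ks b. lk b y * lk (W_mult_basis x y) k)" for x
  have e1: "lk (W_mult (pm_smult c a + a') b) k = (\<Sum>x\<in>A. (c * lk a x + lk a' x) * S x)"
    using lk_W_mult[OF fA _ s1 order_refl] by (simp add: lookup_add S_def)
  have e2: "lk (W_mult a b) k = (\<Sum>x\<in>A. lk a x * S x)"
    using lk_W_mult[OF fA _ s2(1) order_refl] by (simp add: S_def)
  have e3: "lk (W_mult a' b) k = (\<Sum>x\<in>A. lk a' x * S x)"
    using lk_W_mult[OF fA _ s2(2) order_refl] by (simp add: S_def)
  show "lk (W_mult (pm_smult c a + a') b) k = lk (pm_smult c (W_mult a b) + W_mult a' b) k"
    unfolding lookup_add lookup_pm_smult e1 e2 e3
    by (simp add: sum_distrib_left sum.distrib algebra_simps)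
qed

lemma W_mult_lin2: fixes c :: "'k::field" shows "W_mult a (pm_smult c b + b') = pm_smult c (W_mult a b) + W_mult a b'"
proof (rule poly_mapping_eqI)
  fix k
  define B where "B = ks b \<union> ks b'"
  have fB: "finite B" unfolding B_def by simp
  have s1: "ks (pm_smult c b + b') \<subseteq> B" using keys_add[of "pm_smult c b" b'] keys_pm_smult[of c b]
    unfolding B_def by blast
  have s2: "ks b \<subseteq> B" "ks b' \<subseteq> B" unfolding B_def by auto
  define M where "M x y = (lk (W_mult_basis x y) k :: 'k)" for x y
  have e1: "lk (W_mult a (pm_smult c b + b')) k = (\<Sum>x\<in>ks a. lk a x * (\<Sum>y\<in>B. (c * lk b y + lk b' y) * M x y))"
    using lk_W_mult[OF _ fB order_refl s1] by (simp add: lookup_add M_def)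
  have e2: "lk (W_mult a b) k = (\<Sum>x\<in>ks a. lk a x * (\<Sum>y\<in>B. lk b y * M x y))"
    using lk_W_mult[OF _ fB order_refl s2(1)] by (simp add: M_def)
  have e3: "lk (W_mult a b') k = (\<Sum>x\<in>ks a. lk a x * (\<Sum>y\<in>B. lk b' y * M x y))"
    using lk_W_mult[OF _ fB order_refl s2(2)] by (simp add: M_def)
  show "lk (W_mult a (pm_smult c b + b')) k = lk (pm_smult c (W_mult a b) + W_mult a b') k"
    unfolding lookup_add lookup_pm_smult e1 e2 e3
    by (simp add: sum_distrib_left sum.distrib algebra_simps)
qed

lemma W_mult_zero1: "W_mult 0 b = 0" by (simp add: W_mult_def)
lemma W_mult_zero2: "W_mult a 0 = 0" by (simp add: W_mult_def)

lemma lk_W_coprod: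
  assumes fA: "finite A" and sA: "ks a \<subseteq> A"
  shows "lk (W_coprod a) k = (\<Sum>x\<in>A. lk a x * lk (W_coprod_basis x) k)"
proof -
  have "lk (W_coprod a) k = (\<Sum>x\<in>ks a. lk a x * lk (W_coprod_basis x) k)"
    by (simp add: W_coprod_def lookup_sum)
  also have "\<dots> = (\<Sum>x\<in>A. lk a x * lk (W_coprod_basis x) k)" by (rule sum_keys[OF fA sA])
  finally show ?thesis .
qed

lemma W_coprod_lin: "W_coprod (pm_smult c a + a') = pm_smult c (W_coprod a) + W_coprod a'"
proof (rule poly_mapping_eqI)
  fix k
  define A where "A = ks a \<union> ks a'"
  have fA: "finite A" unfolding A_def by simp
  have s1: "ks (pm_smult c a + a') \<subseteq> A" using keys_add[of "pm_smult c a" a'] keys_pm_smult[of c a]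
    unfolding A_def by blast
  have s2: "ks a \<subseteq> A" "ks a' \<subseteq> A" unfolding A_def by auto
  show "lk (W_coprod (pm_smult c a + a')) k = lk (pm_smult c (W_coprod a) + W_coprod a') k"
    unfolding lookup_add lookup_pm_smult lk_W_coprod[OF fA s1] lk_W_coprod[OF fA s2(1)] lk_W_coprod[OF fA s2(2)]
    by (simp add: sum_distrib_left sum.distrib algebra_simps)
qed

lemma W_coprod_zero: "W_coprod 0 = 0" by (simp add: W_coprod_def)

lemma lk_W_deg: "lk (W_deg_part d a) k = (if length (fst k) = d then lk a k else 0)"
proof -
  have e: "lk (if length (fst x) = d then sg x (lk a x) else 0) k
      = (if x = k then (if length (fst k) = d then lk a k else 0) else 0)" for x
    by (auto simp: lookup_single when_def)
  have "lk (W_deg_part d a) k = (\<Sum>x\<in>ks a. (if x = k then (if length (fst k) = d then lk a k else 0) else 0))"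
    unfolding W_deg_part_def lookup_sum e by simp
  also have "\<dots> = (if k \<in> ks a then (if length (fst k) = d then lk a k else 0) else 0)"
    by (simp add: sum.delta)
  finally show ?thesis by (auto simp: in_keys_iff)
qed

lemma W_deg_lin: "W_deg_part d (pm_smult c a + a') = pm_smult c (W_deg_part d a) + W_deg_part d a'"
  by (rule poly_mapping_eqI) (simp add: lk_W_deg lookup_add)

lemma W_deg_zero: "W_deg_part d 0 = 0"
  by (rule poly_mapping_eqI) (simp add: lk_W_deg)

lemma span_lin_map:
  assumes "f 0 = 0" "\<And>c x y. f (pm_smult c x + y) = pm_smult c (f x) + f y"
    "\<And>x. x \<in> S \<Longrightarrow> f x \<in> pmm.span T" "a \<in> pmm.span S"
  shows "f a \<in> pmm.span T"
  using assms(4)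
proof (induction rule: pmm.span_induct_alt)
  case base then show ?case using assms(1) by (simp add: pmm.span_zero)
next
  case (step c x y)
  then show ?case using assms(2,3) by (simp add: pmm.span_add pmm.span_scale)
qed



abbreviation Kt :: "nat \<Rightarrow> (nat \<Rightarrow> nat) \<Rightarrow> (nat list \<times> nat) set" where
  "Kt N p \<equiv> (\<lambda>w. (w, N)) ` reduced_words N p"

lemma finite_Kt: "finite (Kt N p)" using finite_R by simp

lemma lk_perm: "lk (perm_elt N p :: 'k::field W) k = (if k \<in> Kt N p then 1 else 0)"
  unfolding perm_elt_ind by (rule lookup_ind[OF finite_Kt])

lemma ks_perm: "ks (perm_elt N p :: 'k::field W) = Kt N p"
  unfolding perm_elt_ind by (rule keys_ind[OF finite_Kt])

lemma deg_gen: "W_deg_part d (perm_elt N p :: 'k::field W) = (if d = ninv p then perm_elt N p else 0)"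
proof (rule poly_mapping_eqI)
  fix k
  show "lk (W_deg_part d (perm_elt N p :: 'k::field W)) k = lk (if d = ninv p then perm_elt N p else 0) k"
    unfolding lk_W_deg using R_len[of _ N p] by (auto simp: lk_perm)
qed

lemma W_tensor_ind: "finite A \<Longrightarrow> finite B \<Longrightarrow> W_tensor (ind A :: 'k::field W) (ind B) = ind (A \<times> B)"
proof -
  assume fA: "finite A" and fB: "finite B"
  have "W_tensor (ind A :: 'k::field W) (ind B) = (\<Sum>x\<in>A. \<Sum>y\<in>B. sg (x, y) 1)"
    unfolding W_tensor_def keys_ind[OF fA] keys_ind[OF fB] by (simp add: lookup_ind fA fB)
  also have "\<dots> = ind (A \<times> B)"
    unfolding ind_def sum.cartesian_product by (simp add: split_def)
  finally show ?thesis .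
qed

lemma mult_gen0: "W_mult (perm_elt m s :: 'k::field W) (perm_elt n t) =
   (\<Sum>v\<in>reduced_words m s. \<Sum>w\<in>reduced_words n t. W_mult_basis (v, m) (w, n))"
proof -
  have "W_mult (perm_elt m s :: 'k::field W) (perm_elt n t) = (\<Sum>x\<in>Kt m s. \<Sum>y\<in>Kt n t. W_mult_basis x y)"
    unfolding W_mult_def ks_perm by (simp add: lk_perm)
  also have "\<dots> = (\<Sum>v\<in>reduced_words m s. \<Sum>w\<in>reduced_words n t. W_mult_basis (v, m) (w, n))"
    by (simp add: sum.reindex inj_on_def)
  finally show ?thesis .
qed

lemma shift_gt: "set w \<subseteq> {1..n} \<Longrightarrow> \<forall>x\<in>set (shift_word w m). \<not> x \<le> m"
  by (auto simp: shift_word_def)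

lemma mult_basis_ind:
  assumes v: "set v \<subseteq> {1..m}" and w: "set w \<subseteq> {1..n}"
  shows "(W_mult_basis (v, m) (w, n) :: 'k::field W) = ind ((\<lambda>u. (u, m + n)) ` Sh (\<lambda>i. i \<le> m) v (shift_word w m))"
proof -
  have H: "finite (Sh (\<lambda>i. i \<le> m) v (shift_word w m)) \<and> shuffle_ms v (shift_word w m) = mset_set (Sh (\<lambda>i. i \<le> m) v (shift_word w m))"
  proof -
    have "\<forall>x\<in>set v. x \<le> m"
    proof
      fix x assume "x \<in> set v"
      then have "x \<in> {1..m}" using v by blast
      then show "x \<le> m" by simp
    qed
    then show ?thesis using shuffle_Sh[of v "\<lambda>i. i \<le> m" "shift_word w m"] shift_gt[OF w] by blast
  qed
  have "(W_mult_basis (v, m) (w, n) :: 'k::field W) = (\<Sum>u\<in>Sh (\<lambda>i. i \<le> m) v (shift_word w m). W_basis u (m + n))"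
    unfolding W_mult_basis_def using H by (simp add: sum_unfold_sum_mset)
  also have "\<dots> = ind ((\<lambda>u. (u, m + n)) ` Sh (\<lambda>i. i \<le> m) v (shift_word w m))"
    by (subst ind_image) (auto simp: inj_on_def W_basis_def)
  finally show ?thesis .
qed

lemma R_set: "w \<in> reduced_words N p \<Longrightarrow> set w \<subseteq> {1..N}"
  by (simp add: Rchar)

lemma Lw_Sh: "u \<in> Sh (\<lambda>i. i \<le> m) v (shift_word w m) \<Longrightarrow> Lw m u = v"
  by (simp add: Sh_def Lw_def)

lemma Hw_Sh: "u \<in> Sh (\<lambda>i. i \<le> m) v (shift_word w m) \<Longrightarrow> Hw m u = w"
  by (simp add: Sh_def Hw_def shift_word_def comp_def)

lemma Sh_set:
  assumes u: "u \<in> Sh (\<lambda>i. i \<le> m) v (shift_word w m)" and v: "set v \<subseteq> {1..m}" and w: "set w \<subseteq> {1..n}"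
  shows "set u \<subseteq> {1..m + n}"
proof
  fix x assume x: "x \<in> set u"
  show "x \<in> {1..m + n}"
  proof (cases "x \<le> m")
    case True
    have ev: "v = filter (\<lambda>i. i \<le> m) u" using u by (simp add: Sh_def)
    have "x \<in> set v" unfolding ev using x True by simp
    then show ?thesis using v by auto
  next
    case False
    have ew: "shift_word w m = filter (\<lambda>i. \<not> i \<le> m) u" using u by (simp add: Sh_def)
    have "x \<in> set (shift_word w m)" unfolding ew using x False by simp
    then show ?thesis using w by (auto simp: shift_word_def)
  qed
qed

lemma U_red:
  assumes u: "u \<in> Sh (\<lambda>i. i \<le> m) v (shift_word w m)" and v: "v \<in> reduced_words m s"
    and w: "w \<in> reduced_words n t"
  shows "u \<in> reduced_words (m + n) (word_perm u)"
proof -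
  have su: "set u \<subseteq> {1..m + n}" using Sh_set[OF u R_set[OF v] R_set[OF w]] .
  have "Good m u" unfolding Good_def Lw_Sh[OF u] Hw_Sh[OF u] using v w by (simp add: Rchar)
  then have "red u" using good_red[OF su] by blast
  then show ?thesis using su by (simp add: Rchar)
qed

lemma U_closed:
  assumes u: "u \<in> Sh (\<lambda>i. i \<le> m) v (shift_word w m)" and v: "v \<in> reduced_words m s"
    and w: "w \<in> reduced_words n t" and u': "u' \<in> reduced_words (m + n) (word_perm u)"
  shows "Lw m u' \<in> reduced_words m s \<and> Hw m u' \<in> reduced_words n t
     \<and> u' \<in> Sh (\<lambda>i. i \<le> m) (Lw m u') (shift_word (Hw m u') m)"
proof -
  have ur: "u \<in> reduced_words (m + n) (word_perm u)" by (rule U_red[OF u v w])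
  have su: "set u \<subseteq> {1..m + n}" "red u" using ur by (simp_all add: Rchar)
  have su': "set u' \<subseteq> {1..m + n}" "red u'" "word_perm u' = word_perm u" using u' by (simp_all add: Rchar)
  have Gu: "Good m u" unfolding Good_def Lw_Sh[OF u] Hw_Sh[OF u] using v w by (simp add: Rchar)
  have G: "Good m u' \<and> Dat m u' = Dat m u"
    using main_b[of "length u" "m + n" m] su su' Gu by blast
  have Du: "Dat m u = (s, t)" unfolding Dat_def Lw_Sh[OF u] Hw_Sh[OF u] using v w by (simp add: Rchar)
  have sL: "set (Lw m u') \<subseteq> {1..m}" using su'(1) by (auto simp: Lw_def)
  have sH: "set (Hw m u') \<subseteq> {1..n}"
  proof
    fix x assume "x \<in> set (Hw m u')"
    then obtain y where y: "y \<in> set u'" "\<not> y \<le> m" "x = y - m" by (auto simp: Hw_def)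
    then have "y \<le> m + n" using su'(1) by auto
    then show "x \<in> {1..n}" using y by auto
  qed
  have L: "Lw m u' \<in> reduced_words m s" using G Du sL by (simp add: Rchar Good_def Dat_def)
  have H: "Hw m u' \<in> reduced_words n t" using G Du sH by (simp add: Rchar Good_def Dat_def)
  have "map (\<lambda>i. i - m + m) (filter (\<lambda>i. \<not> i \<le> m) u') = filter (\<lambda>i. \<not> i \<le> m) u'"
    by (rule map_idI) auto
  then have "shift_word (Hw m u') m = filter (\<lambda>i. \<not> i \<le> m) u'"
    by (simp add: shift_word_def Hw_def comp_def)
  then have "u' \<in> Sh (\<lambda>i. i \<le> m) (Lw m u') (shift_word (Hw m u') m)"
    by (simp add: Sh_def Lw_def)
  then show ?thesis using L H by blast
qed



abbreviation GS :: "'k::field W set" where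
  "GS \<equiv> {perm_elt n p | n p. p permutes {1..n+1}}"

lemma Pi_eq: "Pi_space = pmm.span GS"
  by (simp add: Pi_space_def lin_span_eq)

lemma gen_in: assumes "set a \<subseteq> {1..N}" shows "(perm_elt N (word_perm a) :: 'k::field W) \<in> pmm.span GS"
proof -
  have "word_perm a permutes {1..N+1}" using wp_permutes[of a N] assms by simp
  then show ?thesis by (intro pmm.span_base) blast
qed

lemma set_le_m: "set v \<subseteq> {1..m} \<Longrightarrow> \<forall>x\<in>set v. x \<le> m"
proof
  fix x assume "set v \<subseteq> {1..m}" "x \<in> set v"
  then have "x \<in> {1..m}" by blast
  then show "x \<le> m" by simp
qed

lemma finite_Sh_R: "v \<in> reduced_words m s \<Longrightarrow> w \<in> reduced_words n t \<Longrightarrow> finite (Sh (\<lambda>i. i \<le> m) v (shift_word w m))"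
  using shuffle_Sh[of v "\<lambda>i. i \<le> m" "shift_word w m"] set_le_m[OF R_set] shift_gt[OF R_set] by blast

lemma mult_gen: "W_mult (perm_elt m s :: 'k::field W) (perm_elt n t) \<in> pmm.span GS"
proof -
  define P where "P = (\<lambda>i::nat. i \<le> m)"
  define N where "N = m + n"
  define A where "A vw = (\<lambda>u. (u, N)) ` Sh P (fst vw) (shift_word (snd vw) m)" for vw
  define I where "I = reduced_words m s \<times> reduced_words n t"
  have fI: "finite I" unfolding I_def using finite_R by simp
  have fA: "finite (A vw)" if "vw \<in> I" for vw
  proof -
    have "fst vw \<in> reduced_words m s" "snd vw \<in> reduced_words n t" using that unfolding I_def by (auto simp: mem_Times_iff)
    then have "finite (Sh P (fst vw) (shift_word (snd vw) m))" unfolding P_def by (rule finite_Sh_R)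
    then show ?thesis unfolding A_def by simp
  qed
  have mb: "(W_mult_basis (v, m) (w, n) :: 'k W) = ind (A (v, w))"
    if "v \<in> reduced_words m s" "w \<in> reduced_words n t" for v w
    unfolding A_def P_def N_def using mult_basis_ind[OF R_set[OF that(1)] R_set[OF that(2)]] by simp
  have e1: "W_mult (perm_elt m s :: 'k::field W) (perm_elt n t) = (\<Sum>vw\<in>I. ind (A vw))"
  proof -
    have "W_mult (perm_elt m s :: 'k::field W) (perm_elt n t)
       = (\<Sum>v\<in>reduced_words m s. \<Sum>w\<in>reduced_words n t. ind (A (v, w)))"
      unfolding mult_gen0 by (rule sum.cong[OF refl], rule sum.cong[OF refl], rule mb, assumption+)
    also have "\<dots> = (\<Sum>(v, w)\<in>I. ind (A (v, w)))"
      unfolding I_def by (rule sum.cartesian_product)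
    also have "\<dots> = (\<Sum>vw\<in>I. ind (A vw))"
      by (rule sum.cong) auto
    finally show ?thesis .
  qed
  define U where "U = (\<Union>vw\<in>I. A vw)"
  have disjA: "A vw \<inter> A vw' = {}" if "vw \<in> I" "vw' \<in> I" "vw \<noteq> vw'" for vw vw'
  proof (rule ccontr)
    assume "A vw \<inter> A vw' \<noteq> {}"
    then obtain u where u1: "u \<in> Sh P (fst vw) (shift_word (snd vw) m)"
      and u2: "u \<in> Sh P (fst vw') (shift_word (snd vw') m)"
      unfolding A_def by auto
    have "fst vw = fst vw'" using Lw_Sh[OF u1[unfolded P_def]] Lw_Sh[OF u2[unfolded P_def]] by simp
    moreover have "snd vw = snd vw'" using Hw_Sh[OF u1[unfolded P_def]] Hw_Sh[OF u2[unfolded P_def]] by simp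
    ultimately have "fst vw = fst vw'" "snd vw = snd vw'" by simp_all
    then show False using that(3) by (simp add: prod_eq_iff)
  qed
  have e2: "(\<Sum>vw\<in>I. ind (A vw)) = (ind U :: 'k W)"
    unfolding U_def by (rule ind_UN[symmetric, OF fI fA disjA]) auto
  have fU: "finite U" unfolding U_def using fI fA by auto
  define T where "T = word_perm ` fst ` U"
  have fT: "finite T" unfolding T_def using fU by simp
  have inU: "\<exists>v w. v \<in> reduced_words m s \<and> w \<in> reduced_words n t \<and> x = (fst x, N)
      \<and> fst x \<in> Sh P v (shift_word w m)" if xU: "x \<in> U" for x
  proof -
    obtain vw where vw: "vw \<in> I" "x \<in> A vw" using xU unfolding U_def by blast
    then obtain u where u: "x = (u, N)" "u \<in> Sh P (fst vw) (shift_word (snd vw) m)" unfolding A_def by blast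
    show ?thesis using vw(1) u by (intro exI[of _ "fst vw"] exI[of _ "snd vw"]) (auto simp: I_def mem_Times_iff)
  qed
  have Ueq: "U = (\<Union>p\<in>T. Kt N p)"
  proof
    show "U \<subseteq> (\<Union>p\<in>T. Kt N p)"
    proof
      fix x assume x: "x \<in> U"
      then obtain v w where vw: "v \<in> reduced_words m s" "w \<in> reduced_words n t" "x = (fst x, N)"
        "fst x \<in> Sh P v (shift_word w m)" using inU by blast
      have "fst x \<in> reduced_words N (word_perm (fst x))"
        using U_red[OF vw(4)[unfolded P_def] vw(1,2)] unfolding N_def .
      moreover have "word_perm (fst x) \<in> T" unfolding T_def using x by blast
      moreover have "x \<in> Kt N (word_perm (fst x))"
        using vw(3) calculation(1) by (metis imageI)
      ultimately show "x \<in> (\<Union>p\<in>T. Kt N p)" by blast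
    qed
    show "(\<Union>p\<in>T. Kt N p) \<subseteq> U"
    proof
      fix y assume "y \<in> (\<Union>p\<in>T. Kt N p)"
      then obtain x u' where x: "x \<in> U" and y: "y = (u', N)" and u': "u' \<in> reduced_words N (word_perm (fst x))"
        unfolding T_def by blast
      obtain v w where vw: "v \<in> reduced_words m s" "w \<in> reduced_words n t"
        "fst x \<in> Sh P v (shift_word w m)" using inU[OF x] by blast
      have C: "Lw m u' \<in> reduced_words m s \<and> Hw m u' \<in> reduced_words n t
         \<and> u' \<in> Sh (\<lambda>i. i \<le> m) (Lw m u') (shift_word (Hw m u') m)"
        using U_closed[OF vw(3)[unfolded P_def] vw(1,2)] u' unfolding N_def by blast
      then have "(Lw m u', Hw m u') \<in> I" unfolding I_def by simp
      moreover have "y \<in> A (Lw m u', Hw m u')"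
        unfolding A_def P_def y using C by (intro imageI) simp
      ultimately have "(Lw m u', Hw m u') \<in> I" "y \<in> A (Lw m u', Hw m u')" by blast+
      then show "y \<in> U" unfolding U_def by blast
    qed
  qed
  have e3: "(ind U :: 'k W) = (\<Sum>p\<in>T. perm_elt N p)"
  proof -
    have "(ind U :: 'k W) = (\<Sum>p\<in>T. ind (Kt N p))"
      unfolding Ueq
    proof (rule ind_UN[OF fT])
      show "finite (Kt N p)" for p by (rule finite_Kt)
      show "Kt N p \<inter> Kt N p' = {}" if "p \<noteq> p'" for p p'
        using that by (auto simp: Rchar)
    qed
    then show ?thesis by (simp add: perm_elt_ind)
  qed
  have "perm_elt N p \<in> pmm.span GS" if "p \<in> T" for p
  proof -
    obtain x where x: "x \<in> U" "p = word_perm (fst x)" using \<open>p \<in> T\<close> unfolding T_def by blast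
    obtain v w where vw: "v \<in> reduced_words m s" "w \<in> reduced_words n t"
      "fst x \<in> Sh P v (shift_word w m)" using inU[OF x(1)] by blast
    have "set (fst x) \<subseteq> {1..N}" using Sh_set[OF vw(3)[unfolded P_def] R_set[OF vw(1)] R_set[OF vw(2)]]
      unfolding N_def .
    then show ?thesis using gen_in x(2) by blast
  qed
  then have "(\<Sum>p\<in>T. perm_elt N p) \<in> pmm.span GS" by (intro pmm.span_sum)
  then show ?thesis using e1 e2 e3 by simp
qed



lemma coprod_gen0: "W_coprod (perm_elt N p :: 'k::field W) = (\<Sum>w\<in>reduced_words N p. W_coprod_basis (w, N))"
proof -
  have "W_coprod (perm_elt N p :: 'k::field W) = (\<Sum>x\<in>Kt N p. W_coprod_basis x)"
    unfolding W_coprod_def ks_perm by (simp add: lk_perm)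
  also have "\<dots> = (\<Sum>w\<in>reduced_words N p. W_coprod_basis (w, N))"
    by (simp add: sum.reindex inj_on_def)
  finally show ?thesis .
qed

lemma coprod_basis_ind: "(W_coprod_basis (w, N) :: 'k::field WW) = ind ((\<lambda>i. ((take i w, N), (drop i w, N))) ` {0..length w})"
proof -
  have inj: "inj_on (\<lambda>i. ((take i w, N), (drop i w, N))) {0..length w}"
  proof (rule inj_onI)
    fix i j assume "i \<in> {0..length w}" "j \<in> {0..length w}"
      "((take i w, N), (drop i w, N)) = ((take j w, N), (drop j w, N))"
    then have "length (take i w) = length (take j w)" "i \<le> length w" "j \<le> length w" by auto
    then show "i = j" by simp
  qed
  show ?thesis unfolding W_coprod_basis_def by (simp add: ind_image[OF inj])
qed

lemma coprod_gen: "W_coprod (perm_elt N p :: 'k::field W) \<in> pmm.span {W_tensor a b | a b. a \<in> Pi_space \<and> b \<in> Pi_space}"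
proof -
  define R where "R = reduced_words N p"
  define C where "C (w :: nat list) = (\<lambda>i. ((take i w, N), (drop i w, N))) ` {0..length w}" for w
  have fR: "finite R" unfolding R_def by (rule finite_R)
  have fC: "finite (C w)" for w unfolding C_def by simp
  have disjC: "C w \<inter> C w' = {}" if "w \<noteq> w'" for w w'
  proof (rule ccontr)
    assume "C w \<inter> C w' \<noteq> {}"
    then obtain i j where "((take i w, N), (drop i w, N)) = ((take j w', N), (drop j w', N))"
      unfolding C_def by auto
    then have "take i w @ drop i w = take j w' @ drop j w'" by simp
    then show False using that by simp
  qed
  define D where "D = (\<Union>w\<in>R. C w)"
  have fD: "finite D" unfolding D_def using fR fC by simp
  have e1: "W_coprod (perm_elt N p :: 'k::field W) = ind D"
  proof -
    have "W_coprod (perm_elt N p :: 'k::field W) = (\<Sum>w\<in>R. ind (C w))"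
      unfolding coprod_gen0 R_def C_def coprod_basis_ind by (rule refl)
    also have "\<dots> = ind D" unfolding D_def by (rule ind_UN[symmetric, OF fR]) (use fC disjC in auto)
    finally show ?thesis .
  qed
  have Dmem: "x \<in> D \<longleftrightarrow> (\<exists>a b. x = ((a, N), (b, N)) \<and> a @ b \<in> R)" for x
  proof
    assume "x \<in> D"
    then obtain w i where "w \<in> R" "i \<le> length w" "x = ((take i w, N), (drop i w, N))"
      unfolding D_def C_def by auto
    then show "\<exists>a b. x = ((a, N), (b, N)) \<and> a @ b \<in> R" by (intro exI[of _ "take i w"] exI[of _ "drop i w"]) simp
  next
    assume "\<exists>a b. x = ((a, N), (b, N)) \<and> a @ b \<in> R"
    then obtain a b where ab: "x = ((a, N), (b, N))" "a @ b \<in> R" by blast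
    have "x \<in> C (a @ b)" unfolding C_def ab(1)
      by (rule image_eqI[of _ _ "length a"]) auto
    then show "x \<in> D" unfolding D_def using ab(2) by blast
  qed
  define Q where "Q = (\<lambda>x. (word_perm (fst (fst x)), word_perm (fst (snd x)))) ` D"
  have fQ: "finite Q" unfolding Q_def using fD by simp
  define B where "B q = Kt N (fst q) \<times> Kt N (snd q)" for q
  have Deq: "D = (\<Union>q\<in>Q. B q)"
  proof
    show "D \<subseteq> (\<Union>q\<in>Q. B q)"
    proof
      fix x assume x: "x \<in> D"
      then obtain a b where ab: "x = ((a, N), (b, N))" "a @ b \<in> R" using Dmem by blast
      have "(word_perm a, word_perm b) \<in> Q" unfolding Q_def using x ab(1) by force
      moreover have "a \<in> reduced_words N (word_perm a)" "b \<in> reduced_words N (word_perm b)"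
        using R_split[of a b N p] ab(2) unfolding R_def by auto
      ultimately show "x \<in> (\<Union>q\<in>Q. B q)" unfolding B_def ab(1) by force
    qed
    show "(\<Union>q\<in>Q. B q) \<subseteq> D"
    proof
      fix y assume "y \<in> (\<Union>q\<in>Q. B q)"
      then obtain x where x: "x \<in> D" and y: "y \<in> B (word_perm (fst (fst x)), word_perm (fst (snd x)))"
        unfolding Q_def by blast
      obtain a0 b0 where ab0: "x = ((a0, N), (b0, N))" "a0 @ b0 \<in> R" using x Dmem by blast
      obtain a b where ab: "y = ((a, N), (b, N))" "a \<in> reduced_words N (word_perm a0)"
          "b \<in> reduced_words N (word_perm b0)"
        using y unfolding B_def ab0(1) by auto
      have "a @ b \<in> R" using R_join[OF ab(2,3)] ab0(2) unfolding R_def by blast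
      then show "y \<in> D" using Dmem ab(1) by blast
    qed
  qed
  have e2: "ind D = (\<Sum>q\<in>Q. (ind (B q) :: 'k WW))"
    unfolding Deq
  proof (rule ind_UN[OF fQ])
    show "finite (B q)" for q unfolding B_def using finite_Kt by simp
    show "B q \<inter> B q' = {}" if "q \<noteq> q'" for q q'
    proof (rule ccontr)
      assume "B q \<inter> B q' \<noteq> {}"
      then obtain a b where "a \<in> reduced_words N (fst q)" "a \<in> reduced_words N (fst q')"
        "b \<in> reduced_words N (snd q)" "b \<in> reduced_words N (snd q')"
        unfolding B_def by auto
      then have "fst q = fst q'" "snd q = snd q'" by (auto simp: Rchar)
      then show False using that by (simp add: prod_eq_iff)
    qed
  qed
  have e3: "(ind (B q) :: 'k WW) = W_tensor (perm_elt N (fst q)) (perm_elt N (snd q))" for q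
    unfolding B_def perm_elt_ind by (rule W_tensor_ind[symmetric, OF finite_Kt finite_Kt])
  have mem: "W_tensor (perm_elt N (fst q) :: 'k W) (perm_elt N (snd q)) \<in> {W_tensor a b | a b. a \<in> Pi_space \<and> b \<in> Pi_space}"
    if qQ: "q \<in> Q" for q
  proof -
    obtain x where x: "x \<in> D" "q = (word_perm (fst (fst x)), word_perm (fst (snd x)))"
      using qQ unfolding Q_def by blast
    obtain a b where ab: "x = ((a, N), (b, N))" "a @ b \<in> R" using x(1) Dmem by blast
    have "set (a @ b) \<subseteq> {1..N}" using ab(2) unfolding R_def by (rule R_set)
    then have "set a \<subseteq> {1..N}" "set b \<subseteq> {1..N}" by auto
    then have "(perm_elt N (word_perm a) :: 'k W) \<in> Pi_space" "(perm_elt N (word_perm b) :: 'k W) \<in> Pi_space"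
      unfolding Pi_eq using gen_in[of a N] gen_in[of b N] by blast+
    then show ?thesis using x(2) ab(1) by auto
  qed
  show ?thesis
    unfolding e1 e2 e3 by (intro pmm.span_sum pmm.span_base mem)
qed

theorem theorem4p1:
  shows "(Pi_space :: 'k::field W set) \<subseteq> W_space
    \<and> (\<forall>a\<in>(Pi_space :: 'k W set). \<forall>d. W_deg_part d a \<in> Pi_space)
    \<and> (W_unit :: 'k W) \<in> Pi_space
    \<and> (\<forall>a\<in>(Pi_space :: 'k W set). \<forall>b\<in>Pi_space. W_mult a b \<in> Pi_space)
    \<and> (\<forall>a\<in>(Pi_space :: 'k W set). W_coprod a \<in> tensor_span Pi_space)"
proof (intro conjI ballI allI)
  show "(Pi_space :: 'k::field W set) \<subseteq> W_space"
  proof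
    fix a :: "'k W" assume "a \<in> Pi_space"
    then have "a \<in> pmm.span GS" by (simp add: Pi_eq)
    then show "a \<in> W_space"
    proof (induction rule: pmm.span_induct_alt)
      case base then show ?case by (simp add: W_space_def)
    next
      case (step c x y)
      obtain n p where x: "x = perm_elt n p" using step(1) by blast
      have kx: "ks x \<subseteq> {k. case k of (w, n) \<Rightarrow> set w \<subseteq> {1..n}}"
      proof
        fix k assume "k \<in> ks x"
        then obtain w where k: "k = (w, n)" "w \<in> reduced_words n p" unfolding x ks_perm by blast
        have "set w \<subseteq> {1..n}" using R_set[OF k(2)] .
        then show "k \<in> {k. case k of (w, n) \<Rightarrow> set w \<subseteq> {1..n}}" using k(1) by simp
      qed
      have "ks (pm_smult c x + y) \<subseteq> ks x \<union> ks y"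
        using keys_add[of "pm_smult c x" y] keys_pm_smult[of c x] by blast
      then show ?case using kx step(2) unfolding W_space_def by blast
    qed
  qed
next
  fix a :: "'k W" and d assume "a \<in> Pi_space"
  then have a: "a \<in> pmm.span GS" by (simp add: Pi_eq)
  have "W_deg_part d a \<in> pmm.span GS"
  proof (rule span_lin_map[OF W_deg_zero W_deg_lin _ a])
    fix x :: "'k W" assume "x \<in> GS"
    then obtain n p where x: "x = perm_elt n p" "p permutes {1..n+1}" by blast
    show "W_deg_part d x \<in> pmm.span GS"
      unfolding x(1) deg_gen using x by (auto intro: pmm.span_base pmm.span_zero)
  qed
  then show "W_deg_part d a \<in> Pi_space" by (simp add: Pi_eq)
next
  have R0: "reduced_words 0 id = {[]}"
  proof -
    have "w \<in> reduced_words 0 id \<longleftrightarrow> w = []" for w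
      by (auto simp: Rchar red_def)
    then show ?thesis by blast
  qed
  have "(W_unit :: 'k W) = perm_elt 0 id"
    unfolding W_unit_def perm_elt_def R0 by simp
  moreover have "id permutes {1..0+1}" by (rule permutes_id)
  ultimately show "(W_unit :: 'k W) \<in> Pi_space"
    unfolding Pi_eq by (intro pmm.span_base) blast
next
  fix a b :: "'k W" assume "a \<in> Pi_space" "b \<in> Pi_space"
  then have a: "a \<in> pmm.span GS" and b: "b \<in> pmm.span GS" by (simp_all add: Pi_eq)
  have gb: "W_mult g b \<in> pmm.span GS" if gG: "g \<in> GS" for g
  proof -
    obtain m s where g: "g = perm_elt m s" using gG by blast
    show ?thesis
    proof (rule span_lin_map[OF W_mult_zero2 W_mult_lin2 _ b])
      fix x :: "'k W" assume "x \<in> GS"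
      then obtain n t where x: "x = perm_elt n t" by blast
      show "W_mult g x \<in> pmm.span GS" unfolding g x by (rule mult_gen)
    qed
  qed
  have "W_mult a b \<in> pmm.span GS"
    by (rule span_lin_map[where f = "\<lambda>a. W_mult a b", OF W_mult_zero1 W_mult_lin1 gb a])
  then show "W_mult a b \<in> Pi_space" by (simp add: Pi_eq)
next
  fix a :: "'k W" assume "a \<in> Pi_space"
  then have a: "a \<in> pmm.span GS" by (simp add: Pi_eq)
  have "W_coprod a \<in> pmm.span {W_tensor a b | a b. a \<in> Pi_space \<and> b \<in> Pi_space}"
  proof (rule span_lin_map[OF W_coprod_zero W_coprod_lin _ a])
    fix x :: "'k W" assume "x \<in> GS"
    then obtain n p where x: "x = perm_elt n p" by blast
    show "W_coprod x \<in> pmm.span {W_tensor a b | a b. a \<in> Pi_space \<and> b \<in> Pi_space}"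
      unfolding x by (rule coprod_gen)
  qed
  then show "W_coprod a \<in> tensor_span Pi_space" by (simp add: tensor_span_def lin_span_eq)
qed

end
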